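(* Let $G$ be a connected saturated graph with $|E(G)| \leq |V(G)|$ and $2 \leq mp(G) \leq 3$. Then: (1) if $mp(G)=2$, then $G = K_{1,\Delta}$ for some $\Delta\ge 1$, and if $\Delta \geq 2$ then $mp(G+e)=3$ for every pair $e$ of non-adjacent vertices of $G$; (2) if $mp(G)=3$, then $G = K_3$.
   Context: All graphs are finite and simple. A degree monotone path in a graph $G$ is a path $v_1v_2\ldots v_m$ such that $\deg(v_1)\le \cdots\le \deg(v_m)$ or $\deg(v_1)\ge \cdots\ge \deg(v_m)$; its length is its number of vertices. $mp(G)$ denotes the maximum length of a degree monotone path in $G$. A graph $G$ is saturated if $mp(G+e)>mp(G)$ for every pair $e$ of non-adjacent vertices of $G$, where $G+e$ is $G$ with the edge $e$ added (complete graphs are saturated vacuously). *)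

theory Defs
  imports Main
begin

definition simple_graph :: "'a set \<Rightarrow> 'a set set \<Rightarrow> bool" where
  "simple_graph V E \<longleftrightarrow> finite V \<and> (\<forall>e\<in>E. e \<subseteq> V \<and> card e = 2)"

definition adj :: "'a set set \<Rightarrow> 'a \<Rightarrow> 'a \<Rightarrow> bool" where
  "adj E u v \<longleftrightarrow> {u, v} \<in> E"

definition deg :: "'a set \<Rightarrow> 'a set set \<Rightarrow> 'a \<Rightarrow> nat" where
  "deg V E v = card {u \<in> V. adj E u v}"

definition is_path :: "'a set \<Rightarrow> 'a set set \<Rightarrow> 'a list \<Rightarrow> bool" where
  "is_path V E p \<longleftrightarrow> set p \<subseteq> V \<and> distinct p \<and> successively (adj E) p"

definition deg_monotone :: "'a set \<Rightarrow> 'a set set \<Rightarrow> 'a list \<Rightarrow> bool" where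
  "deg_monotone V E p \<longleftrightarrow> sorted (map (deg V E) p) \<or> sorted (rev (map (deg V E) p))"

text \<open>Maximum number of vertices of a degree monotone path (the empty path counts, length 0).\<close>
definition mp :: "'a set \<Rightarrow> 'a set set \<Rightarrow> nat" where
  "mp V E = Max {length p | p. is_path V E p \<and> deg_monotone V E p}"

definition connected :: "'a set \<Rightarrow> 'a set set \<Rightarrow> bool" where
  "connected V E \<longleftrightarrow> V \<noteq> {} \<and>
     (\<forall>u\<in>V. \<forall>v\<in>V. \<exists>p. is_path V E p \<and> p \<noteq> [] \<and> hd p = u \<and> last p = v)"

definition saturated :: "'a set \<Rightarrow> 'a set set \<Rightarrow> bool" where
  "saturated V E \<longleftrightarrow>
     (\<forall>u\<in>V. \<forall>v\<in>V. u \<noteq> v \<and> {u, v} \<notin> E \<longrightarrow> mp V (insert {u, v} E) > mp V E)"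

definition is_star :: "'a set \<Rightarrow> 'a set set \<Rightarrow> nat \<Rightarrow> bool" where
  "is_star V E d \<longleftrightarrow> (\<exists>c\<in>V. card (V - {c}) = d \<and> E = {{c, l} | l. l \<in> V - {c}})"

definition is_K3 :: "'a set \<Rightarrow> 'a set set \<Rightarrow> bool" where
  "is_K3 V E \<longleftrightarrow> card V = 3 \<and> E = {e. e \<subseteq> V \<and> card e = 2}"

end

theory Submission
  imports Defs
begin


lemma adj_sym: "adj E u v = adj E v u"
  by (simp add: adj_def insert_commute)

lemma adj_symD: "adj E u v \<Longrightarrow> adj E v u"
  by (simp add: adj_sym)

lemma adj_irrefl: "simple_graph V E \<Longrightarrow> \<not> adj E u u"
  by (auto simp: adj_def simple_graph_def)

lemma adj_V: "simple_graph V E \<Longrightarrow> adj E u v \<Longrightarrow> u \<in> V \<and> v \<in> V"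
  by (auto simp: adj_def simple_graph_def)

lemma finite_E: "simple_graph V E \<Longrightarrow> finite E"
  unfolding simple_graph_def by (meson Pow_iff finite_Pow_iff finite_subset subsetI)

lemma path_len: "simple_graph V E \<Longrightarrow> is_path V E p \<Longrightarrow> length p \<le> card V"
  unfolding is_path_def simple_graph_def
  by (metis card_mono distinct_card)

lemma finite_paths: "simple_graph V E \<Longrightarrow> finite {length p | p. is_path V E p \<and> deg_monotone V E p}"
proof -
  assume s: "simple_graph V E"
  have "{length p | p. is_path V E p \<and> deg_monotone V E p} \<subseteq> {..card V}"
    using path_len[OF s] by auto
  thus ?thesis using finite_subset by blast
qed

lemma mp_ge: "simple_graph V E \<Longrightarrow> is_path V E p \<Longrightarrow> deg_monotone V E p \<Longrightarrow> length p \<le> mp V E"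
  unfolding mp_def by (rule Max_ge[OF finite_paths]) auto

lemma take_path: "is_path V E p \<Longrightarrow> is_path V E (take k p)"
  unfolding is_path_def
  by (metis append_take_drop_id distinct_append set_take_subset order_trans successively_append_iff)

lemma take_mono: "deg_monotone V E p \<Longrightarrow> deg_monotone V E (take k p)"
  unfolding deg_monotone_def
  by (auto simp: sorted_wrt_rev simp flip: take_map)

lemma mp_le_iff:
  assumes s: "simple_graph V E"
  shows "mp V E \<le> k \<longleftrightarrow> \<not> (\<exists>p. is_path V E p \<and> deg_monotone V E p \<and> length p = Suc k)"
proof
  assume "mp V E \<le> k"
  thus "\<not> (\<exists>p. is_path V E p \<and> deg_monotone V E p \<and> length p = Suc k)"
    using mp_ge[OF s] by fastforce
next
  assume h: "\<not> (\<exists>p. is_path V E p \<and> deg_monotone V E p \<and> length p = Suc k)"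
  have "\<forall>p. is_path V E p \<and> deg_monotone V E p \<longrightarrow> length p \<le> k"
  proof (intro allI impI, rule ccontr)
    fix p assume p: "is_path V E p \<and> deg_monotone V E p" and "\<not> length p \<le> k"
    then have "length (take (Suc k) p) = Suc k" by simp
    with p take_path take_mono h show False by blast
  qed
  moreover have "is_path V E [] \<and> deg_monotone V E []" by (simp add: is_path_def deg_monotone_def)
  ultimately show "mp V E \<le> k" unfolding mp_def
    using finite_paths[OF s] by (subst Max_le_iff) auto
qed

lemma simple_insert: "simple_graph V E \<Longrightarrow> u \<in> V \<Longrightarrow> x \<in> V \<Longrightarrow> u \<noteq> x \<Longrightarrow> simple_graph V (insert {u,x} E)"
  by (auto simp: simple_graph_def)

lemma adj_insert: "adj (insert {u,x} E) a b \<longleftrightarrow> adj E a b \<or> (a = u \<and> b = x) \<or> (a = x \<and> b = u)"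
  by (auto simp: adj_def doubleton_eq_iff)

lemma deg_insert:
  assumes s: "simple_graph V E" and "u \<in> V" "x \<in> V" "u \<noteq> x" "{u,x} \<notin> E"
  shows "deg V (insert {u,x} E) y = deg V E y + (if y = u \<or> y = x then 1 else 0)"
proof -
  have fin: "finite {w\<in>V. adj E w y}" using s by (simp add: simple_graph_def)
  have nu: "\<not> adj E x u" "\<not> adj E u x" using assms by (auto simp: adj_def insert_commute)
  show ?thesis
  proof (cases "y = u")
    case True
    have "{w\<in>V. adj (insert {u,x} E) w y} = insert x {w\<in>V. adj E w y}"
      using assms True by (auto simp: adj_insert)
    thus ?thesis using True fin nu by (simp add: deg_def)
  next
    case F: False
    show ?thesis
    proof (cases "y = x")
      case True
      have "{w\<in>V. adj (insert {u,x} E) w y} = insert u {w\<in>V. adj E w y}"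
        using assms True by (auto simp: adj_insert)
      thus ?thesis using True fin nu F by (simp add: deg_def)
    next
      case False
      have "{w\<in>V. adj (insert {u,x} E) w y} = {w\<in>V. adj E w y}"
        using assms False F by (auto simp: adj_insert)
      thus ?thesis using False F by (simp add: deg_def)
    qed
  qed
qed

lemma deg_edges:
  assumes s: "simple_graph V E" and y: "y \<in> V"
  shows "deg V E y = card {e\<in>E. y \<in> e}"
proof -
  have "bij_betw (\<lambda>w. {w, y}) {w\<in>V. adj E w y} {e\<in>E. y \<in> e}"
  proof (rule bij_betwI')
    fix a b assume "a \<in> {w\<in>V. adj E w y}" "b \<in> {w\<in>V. adj E w y}"
    then show "({a, y} = {b, y}) = (a = b)" using adj_irrefl[OF s]
      by (auto simp: doubleton_eq_iff)
  next
    fix a assume "a \<in> {w\<in>V. adj E w y}" thus "{a, y} \<in> {e\<in>E. y \<in> e}" by (auto simp: adj_def)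
  next
    fix e assume e: "e \<in> {e\<in>E. y \<in> e}"
    then have "e \<subseteq> V" "card e = 2" "y \<in> e" using s by (auto simp: simple_graph_def)
    then obtain a b where ab: "e = {a,b}" "a \<noteq> b" by (meson card_2_iff)
    show "\<exists>w\<in>{w\<in>V. adj E w y}. e = {w, y}"
    proof (cases "y = a")
      case True thus ?thesis using ab e \<open>e \<subseteq> V\<close> by (auto simp: adj_def insert_commute)
    next
      case False thus ?thesis using ab e \<open>e \<subseteq> V\<close> by (auto simp: adj_def)
    qed
  qed
  thus ?thesis unfolding deg_def by (rule bij_betw_same_card)
qed

lemma handshake:
  assumes s: "simple_graph V E"
  shows "(\<Sum>y\<in>V. deg V E y) = 2 * card E"
proof -
  have fV: "finite V" using s by (simp add: simple_graph_def)
  have fE: "finite E" using finite_E[OF s] .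
  have "(\<Sum>y\<in>V. deg V E y) = (\<Sum>y\<in>V. \<Sum>e\<in>E. if y \<in> e then 1 else 0)"
    using deg_edges[OF s] fE by (intro sum.cong) (simp_all add: sum.If_cases Int_def)
  also have "\<dots> = (\<Sum>e\<in>E. \<Sum>y\<in>V. if y \<in> e then 1 else 0)" by (rule sum.swap)
  also have "\<dots> = (\<Sum>e\<in>E. card (V \<inter> e))" using fV by (simp add: sum.If_cases)
  also have "\<dots> = (\<Sum>e\<in>E. 2)"
    using s by (intro sum.cong) (auto simp: simple_graph_def Int_absorb1)
  finally show ?thesis by simp
qed


lemma path_closed:
  assumes "successively (adj E) p" "p \<noteq> []" "hd p \<in> S" "\<forall>a\<in>S. \<forall>b. adj E a b \<longrightarrow> b \<in> S"
  shows "set p \<subseteq> S"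
  using assms
proof (induction p rule: induct_list012)
  case (3 x y zs)
  then have "y \<in> S" by auto
  with 3 have "set (y # zs) \<subseteq> S" by auto
  with 3 show ?case by auto
qed auto

lemma closure:
  assumes c: "connected V E" and u: "u \<in> S" "u \<in> V" and cl: "\<forall>a\<in>S. \<forall>b. adj E a b \<longrightarrow> b \<in> S"
  shows "V \<subseteq> S"
proof
  fix w assume "w \<in> V"
  then obtain p where p: "is_path V E p" "p \<noteq> []" "hd p = u" "last p = w"
    using c u unfolding connected_def by blast
  then have "set p \<subseteq> S" using path_closed[of E p S] u cl by (auto simp: is_path_def)
  thus "w \<in> S" using p by auto
qed

lemma deg_pos:
  assumes s: "simple_graph V E" and c: "connected V E" and y: "y \<in> V" and w: "w \<in> V" "w \<noteq> y"
  shows "deg V E y \<ge> 1"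
proof (rule ccontr)
  assume "\<not> deg V E y \<ge> 1"
  then have "deg V E y = 0" by simp
  then have "{u\<in>V. adj E u y} = {}" using s by (simp add: deg_def simple_graph_def)
  then have "\<forall>a\<in>{y}. \<forall>b. adj E a b \<longrightarrow> b \<in> {y}"
    using adj_V[OF s] adj_sym by fastforce
  then have "V \<subseteq> {y}" using closure[OF c, of y "{y}"] y by auto
  thus False using w by auto
qed

lemma sum_eq_pointwise:
  fixes f g :: "'a \<Rightarrow> nat"
  assumes "finite A" "\<forall>y\<in>A. f y \<le> g y" "sum g A \<le> sum f A"
  shows "\<forall>y\<in>A. f y = g y"
proof (rule ccontr)
  assume "\<not> (\<forall>y\<in>A. f y = g y)"
  then obtain y where "y \<in> A" "f y < g y" using assms(2) by (meson le_neq_implies_less)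
  then have "sum f A < sum g A" using assms by (intro sum_strict_mono_ex1) auto
  thus False using assms(3) by simp
qed


lemma deg_one:
  assumes s: "simple_graph V E" and "deg V E v = 1"
  obtains q where "q \<in> V" "\<And>y. adj E v y \<longleftrightarrow> y = q"
proof -
  have "card {u\<in>V. adj E u v} = 1" using assms by (simp add: deg_def)
  then obtain q where q: "{u\<in>V. adj E u v} = {q}" by (rule card_1_singletonE)
  then have qV: "q \<in> V" by auto
  have "adj E v y \<longleftrightarrow> y = q" for y
  proof
    assume "adj E v y" then have "y \<in> {u\<in>V. adj E u v}" using adj_V[OF s, of v y] adj_sym[of E v y] by simp
    thus "y = q" using q by blast
  next
    assume "y = q" 
    have "adj E q v" using q by blast
    thus "adj E v y" using \<open>y = q\<close> adj_sym[of E v q] by simp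
  qed
  with qV show ?thesis using that by blast
qed

lemma deg_two:
  assumes s: "simple_graph V E" and "deg V E v = 2"
  obtains a b where "a \<in> V" "b \<in> V" "a \<noteq> b" "\<And>y. adj E v y \<longleftrightarrow> y = a \<or> y = b"
proof -
  have "card {u\<in>V. adj E u v} = 2" using assms by (simp add: deg_def)
  then obtain a b where q: "{u\<in>V. adj E u v} = {a,b}" "a \<noteq> b" by (meson card_2_iff)
  then have ab: "a \<in> V" "b \<in> V" by auto
  have "adj E v y \<longleftrightarrow> y = a \<or> y = b" for y
  proof
    assume "adj E v y" then have "y \<in> {u\<in>V. adj E u v}" using adj_V[OF s, of v y] adj_sym[of E v y] by simp
    thus "y = a \<or> y = b" using q by blast
  next
    assume "y = a \<or> y = b" 
    then have "adj E y v" using q by blast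
    thus "adj E v y" using adj_sym[of E v y] by simp
  qed
  with ab q show ?thesis using that by blast
qed

lemma deg_ge2:
  assumes s: "simple_graph V E" and "deg V E v \<ge> 2" "a \<in> V"
  obtains b where "adj E v b" "b \<noteq> a"
proof -
  have "\<not> {u\<in>V. adj E u v} \<subseteq> {a}"
  proof
    assume "{u\<in>V. adj E u v} \<subseteq> {a}"
    then have "card {u\<in>V. adj E u v} \<le> card {a}" by (intro card_mono) auto
    thus False using assms by (simp add: deg_def)
  qed
  then obtain b where "b \<in> V" "adj E b v" "b \<noteq> a" by blast
  thus ?thesis using that adj_symD[of E b v] by blast
qed

lemma nbrs_card:
  assumes s: "simple_graph V E" and "\<And>y. adj E v y \<Longrightarrow> y \<in> A" and "finite A"
  shows "deg V E v \<le> card A"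
  unfolding deg_def using assms adj_symD[of E _ v] by (intro card_mono) auto

lemma nbrs_card2:
  assumes s: "simple_graph V E" and "A \<subseteq> V" and "\<And>y. y \<in> A \<Longrightarrow> adj E v y"
  shows "card A \<le> deg V E v"
  unfolding deg_def using assms adj_symD[of E v] by (intro card_mono) (auto simp: simple_graph_def)

lemma sat_contra:
  assumes s: "simple_graph V E" and sat: "saturated V E" and k: "mp V E = k"
    and "u \<in> V" "x \<in> V" "u \<noteq> x" "{u,x} \<notin> E"
    and no: "\<not> (\<exists>p. is_path V (insert {u,x} E) p \<and> deg_monotone V (insert {u,x} E) p \<and> length p = Suc k)"
  shows False
proof -
  have "mp V (insert {u,x} E) \<le> k" using mp_le_iff[OF simple_insert[OF s assms(4-6)], of k] no by blast
  moreover have "mp V (insert {u,x} E) > mp V E" using sat assms(4-7) unfolding saturated_def by blast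
  ultimately show False using k by simp
qed

lemma len3: "length p = 3 \<longleftrightarrow> (\<exists>a b c. p = [a,b,c])"
  by (auto simp: numeral_eq_Suc length_Suc_conv)
lemma len4: "length p = 4 \<longleftrightarrow> (\<exists>a b c d. p = [a,b,c,d])"
  by (auto simp: numeral_eq_Suc length_Suc_conv)

lemma path3: "is_path V E [a,b,c] \<longleftrightarrow> a \<in> V \<and> b \<in> V \<and> c \<in> V \<and> a \<noteq> b \<and> a \<noteq> c \<and> b \<noteq> c \<and> adj E a b \<and> adj E b c"
  by (auto simp: is_path_def)
lemma path4: "is_path V E [a,b,c,d] \<longleftrightarrow> a \<in> V \<and> b \<in> V \<and> c \<in> V \<and> d \<in> V \<and> a \<noteq> b \<and> a \<noteq> c \<and> a \<noteq> d \<and> b \<noteq> c \<and> b \<noteq> d \<and> c \<noteq> d \<and> adj E a b \<and> adj E b c \<and> adj E c d"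
  by (auto simp: is_path_def)
lemma mono3: "deg_monotone V E [a,b,c] \<longleftrightarrow> (deg V E a \<le> deg V E b \<and> deg V E b \<le> deg V E c) \<or> (deg V E a \<ge> deg V E b \<and> deg V E b \<ge> deg V E c)"
  unfolding deg_monotone_def by auto
lemma mono4: "deg_monotone V E [a,b,c,d] \<longleftrightarrow> (deg V E a \<le> deg V E b \<and> deg V E b \<le> deg V E c \<and> deg V E c \<le> deg V E d) \<or> (deg V E a \<ge> deg V E b \<and> deg V E b \<ge> deg V E c \<and> deg V E c \<ge> deg V E d)"
  unfolding deg_monotone_def by auto



lemma mp_le_card: "simple_graph V E \<Longrightarrow> mp V E \<le> card V"
  using mp_le_iff[of V E "card V"] path_len[of V E] by fastforce

lemma card_ge2_other: "finite V \<Longrightarrow> card V \<ge> 2 \<Longrightarrow> y \<in> V \<Longrightarrow> \<exists>w\<in>V. w \<noteq> y"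
  by (metis One_nat_def card_le_Suc0_iff_eq not_less_eq_eq numeral_2_eq_2)

lemma leaf_or_2reg:
  assumes s: "simple_graph V E" and c: "connected V E" and m: "card E \<le> card V" and n: "card V \<ge> 2"
  shows "(\<exists>v\<in>V. deg V E v = 1) \<or> (\<forall>y\<in>V. deg V E y = 2)"
proof (cases "\<exists>v\<in>V. deg V E v = 1")
  case False
  have fV: "finite V" using s by (simp add: simple_graph_def)
  have ge: "\<forall>y\<in>V. (\<lambda>_. 2::nat) y \<le> deg V E y"
  proof
    fix y assume y: "y \<in> V"
    then obtain w where "w \<in> V" "w \<noteq> y" using card_ge2_other[OF fV n] by blast
    then have "deg V E y \<ge> 1" using deg_pos[OF s c y] by blast
    thus "(\<lambda>_. 2::nat) y \<le> deg V E y" using False y by fastforce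
  qed
  have "sum (deg V E) V \<le> sum (\<lambda>_. 2::nat) V" using handshake[OF s] m by simp
  then have "\<forall>y\<in>V. 2 = deg V E y" using sum_eq_pointwise[OF fV ge] by blast
  thus ?thesis by auto
qed simp

lemma no_path_k:
  assumes s: "simple_graph V E" and "mp V E = k"
  shows "\<not> (is_path V E p \<and> deg_monotone V E p \<and> length p = Suc k)"
  using mp_le_iff[OF s, of k] assms by auto

lemma no3:
  assumes s: "simple_graph V E" and "mp V E = 2" and "is_path V E [a,b,c]"
  shows "\<not> deg_monotone V E [a,b,c]"
  using no_path_k[OF s assms(2), of "[a,b,c]"] assms(3) by (simp add: numeral_eq_Suc)

lemma no4:
  assumes s: "simple_graph V E" and "mp V E = 3" and "is_path V E [a,b,c,d]"
  shows "\<not> deg_monotone V E [a,b,c,d]"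
  using no_path_k[OF s assms(2), of "[a,b,c,d]"] assms(3) by (simp add: numeral_eq_Suc)

lemma key2:
  assumes s: "simple_graph V E" and m: "mp V E = 2" and "adj E a b" "adj E b c" "a \<noteq> c"
  shows "(deg V E b > deg V E a \<and> deg V E b > deg V E c) \<or> (deg V E b < deg V E a \<and> deg V E b < deg V E c)"
proof -
  have "is_path V E [a,b,c]" using assms adj_V[OF s] adj_irrefl[OF s] by (auto simp: path3)
  then have "\<not> deg_monotone V E [a,b,c]" using no3[OF s m] by blast
  thus ?thesis unfolding mono3 by linarith
qed



lemma safe2:
  assumes s: "simple_graph V E" and m: "mp V E = 2"
    and vV: "v \<in> V" and bV: "b \<in> V" and bv: "b \<noteq> v" and bq: "b \<noteq> q"
    and vq: "\<And>y. adj E v y \<longleftrightarrow> y = q"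
    and q3: "deg V E q \<ge> 3" and b2: "deg V E b \<ge> 2" and dv: "deg V E v = 1"
    and qpk: "\<And>y. adj E q y \<Longrightarrow> deg V E y < deg V E q"
    and bpk: "\<And>y. adj E b y \<Longrightarrow> deg V E y < deg V E b"
  shows "\<not> (\<exists>p. is_path V (insert {v,b} E) p \<and> deg_monotone V (insert {v,b} E) p \<and> length p = Suc 2)"
proof
  assume "\<exists>p. is_path V (insert {v,b} E) p \<and> deg_monotone V (insert {v,b} E) p \<and> length p = Suc 2"
  then obtain p where p: "is_path V (insert {v,b} E) p" "deg_monotone V (insert {v,b} E) p" "length p = 3" by auto
  then obtain x y z where "p = [x,y,z]" using len3[of p] by auto
  then have P: "is_path V (insert {v,b} E) [x,y,z]" and M: "deg_monotone V (insert {v,b} E) [x,y,z]" using p by auto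
  let ?E = "insert {v,b} E"
  let ?D = "deg V E" and ?D' = "deg V ?E"
  have ne: "{v,b} \<notin> E" using vq bq by (simp add: adj_def)
  have D': "\<And>w. ?D' w = ?D w + (if w = v \<or> w = b then 1 else 0)"
    using deg_insert[OF s vV bV bv[symmetric] ne] by blast
  have nqb: "\<not> adj E q b"
  proof
    assume "adj E q b" then have "adj E b q" by (rule adj_symD)
    with qpk[OF \<open>adj E q b\<close>] bpk show False by fastforce
  qed
  from P have xy: "adj ?E x y" and yz: "adj ?E y z" and dist: "x \<noteq> y" "x \<noteq> z" "y \<noteq> z"
    and inV: "x \<in> V" "y \<in> V" "z \<in> V" by (auto simp: path3)
  from M have Mo: "(?D' x \<le> ?D' y \<and> ?D' y \<le> ?D' z) \<or> (?D' x \<ge> ?D' y \<and> ?D' y \<ge> ?D' z)" by (simp only: mono3)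
  have A: "\<And>w. adj ?E w y \<longleftrightarrow> adj E w y \<or> (w = v \<and> y = b) \<or> (w = b \<and> y = v)" by (simp add: adj_insert)
  have xy': "adj E x y \<or> (x = v \<and> y = b) \<or> (x = b \<and> y = v)" using xy by (simp add: adj_insert)
  have zy': "adj E z y \<or> (z = v \<and> y = b) \<or> (z = b \<and> y = v)" using yz adj_sym[of ?E y z] by (simp add: adj_insert)
  show False
  proof (cases "y = v")
    case True
    have "x = q \<or> x = b"
    proof (cases "x = b")
      case False then have "adj E x v" using xy' True by auto
      then have "adj E v x" by (rule adj_symD)
      thus ?thesis using vq by simp
    qed simp
    moreover have "z = q \<or> z = b"
    proof (cases "z = b")
      case False then have "adj E z v" using zy' True by auto
      then have "adj E v z" by (rule adj_symD)
      thus ?thesis using vq by simp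
    qed simp
    ultimately show False using Mo D' True dist q3 b2 bq bv dv by auto
  next
    case yv: False
    show False
    proof (cases "y = b")
      case True
      have "?D' w < ?D' b" if "adj E w b \<or> w = v" for w
      proof (cases "w = v")
        case True thus ?thesis using D' b2 dv by simp
      next
        case False
        then have "adj E b w" using that adj_symD[of E w b] by blast
        moreover have "w \<noteq> b" using adj_irrefl[OF s] calculation by auto
        ultimately show ?thesis using D' bpk[of w] False by simp
      qed
      then have "?D' x < ?D' y" "?D' z < ?D' y" using xy' zy' True by auto
      then show False using Mo by linarith
    next
      case yb: False
      show False
      proof (cases "y = q")
        case True
        have "?D' w < ?D' q" if "adj E w q" for w
        proof (cases "w = v")
          case True thus ?thesis using D' q3 bq dv by simp
        next
          case False
          then have "adj E q w" using that adj_symD[of E w q] by blast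
          moreover have "w \<noteq> b" using nqb calculation by auto
          ultimately show ?thesis using D' qpk[of w] False bq yv True by simp
        qed
        then have "?D' x < ?D' y" "?D' z < ?D' y" using xy' zy' True yv yb by auto
        then show False using Mo by linarith
      next
        case yq: False
        have axy: "adj E x y" and azy: "adj E z y" using xy' zy' yv yb by auto
        have "x \<noteq> v" using axy vq yq by auto
        have "z \<noteq> v" using azy vq yq by auto
        have Dy: "?D' y = ?D y" using D' yv yb by simp
        show False
        proof (cases "x = b")
          case True
          have "?D y < ?D b" using bpk[of y] axy True adj_symD[of E x y] by blast
          moreover have "?D' z = ?D z" using D' \<open>z \<noteq> v\<close> True dist by auto
          ultimately have "?D b \<ge> ?D y \<and> ?D y \<ge> ?D z" using Mo D' Dy True by auto
          moreover have "is_path V E [x,y,z]" using axy azy adj_symD[of E z y] dist inV by (simp add: path3)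
          ultimately show False using no3[OF s m, of x y z] True by (simp add: mono3)
        next
          case xb: False
          show False
          proof (cases "z = b")
            case True
            have "?D y < ?D b" using bpk[of y] azy True adj_symD[of E z y] by blast
            moreover have "?D' x = ?D x" using D' \<open>x \<noteq> v\<close> True dist by auto
            ultimately have "?D b \<ge> ?D y \<and> ?D y \<ge> ?D x" using Mo D' Dy True by auto
            moreover have "is_path V E [x,y,z]" using axy azy adj_symD[of E z y] dist inV by (simp add: path3)
            ultimately show False using no3[OF s m, of x y z] True by (simp add: mono3)
          next
            case False
            have "?D' x = ?D x" "?D' z = ?D z" using D' \<open>x \<noteq> v\<close> \<open>z \<noteq> v\<close> xb False by auto
            moreover have "is_path V E [x,y,z]" using axy azy adj_symD[of E z y] dist inV by (simp add: path3)
            ultimately show False using no3[OF s m, of x y z] Mo Dy unfolding mono3 by linarith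
          qed
        qed
      qed
    qed
  qed
qed



lemma star_adj:
  assumes Es: "E = {{c,l} | l. l \<in> V - {c}}"
  shows "adj E a b \<longleftrightarrow> (a = c \<and> b \<in> V - {c}) \<or> (b = c \<and> a \<in> V - {c})"
  unfolding adj_def Es by (auto simp: doubleton_eq_iff)

lemma star_deg:
  assumes Es: "E = {{c,l} | l. l \<in> V - {c}}" and "c \<in> V"
  shows "deg V E a = (if a = c then card (V - {c}) else if a \<in> V then 1 else 0)"
proof -
  have "{x\<in>V. adj E x a} = (if a = c then V - {c} else if a \<in> V then {c} else {})"
    using \<open>c \<in> V\<close> by (auto simp: star_adj[OF Es])
  thus ?thesis unfolding deg_def by simp
qed

lemma star_add:
  assumes s: "simple_graph V E" and cV: "c \<in> V" and Es: "E = {{c,l} | l. l \<in> V - {c}}"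
    and d: "card (V - {c}) \<ge> 2" and uV: "u \<in> V" and wV: "w \<in> V" and uw: "u \<noteq> w" and ne: "{u,w} \<notin> E"
  shows "mp V (insert {u,w} E) = 3"
proof -
  let ?E = "insert {u,w} E"
  have uc: "u \<noteq> c" and wc: "w \<noteq> c" using ne Es uV wV uw by (auto simp: insert_commute)
  have D': "\<And>a. a \<in> V \<Longrightarrow> deg V ?E a = (if a = c then card (V - {c}) else if a = u \<or> a = w then 2 else 1)"
    using deg_insert[OF s uV wV uw ne] star_deg[OF Es cV] uc wc by auto
  have A': "\<And>a b. adj ?E a b \<longleftrightarrow> (a = c \<and> b \<in> V - {c}) \<or> (b = c \<and> a \<in> V - {c}) \<or> (a = u \<and> b = w) \<or> (a = w \<and> b = u)"
    by (simp add: adj_insert star_adj[OF Es])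
  have s': "simple_graph V ?E" using simple_insert[OF s uV wV uw] .
  have "is_path V ?E [u,w,c]" using A' uV wV cV uw uc wc by (simp add: path3)
  moreover have "deg_monotone V ?E [u,w,c]" using D' uV wV cV uc wc d by (simp add: mono3)
  ultimately have ge: "3 \<le> mp V ?E" using mp_ge[OF s', of "[u,w,c]"] by simp
  have "\<not> (\<exists>p. is_path V ?E p \<and> deg_monotone V ?E p \<and> length p = Suc 3)"
  proof
    assume "\<exists>p. is_path V ?E p \<and> deg_monotone V ?E p \<and> length p = Suc 3"
    then obtain p where p: "is_path V ?E p" "deg_monotone V ?E p" "length p = 4" by auto
    show False
    proof (cases "card (V - {c}) = 2")
      case True
      have "card V = 3" using True cV s by (simp add: simple_graph_def card_Diff_singleton_if)
      thus False using path_len[OF s' p(1)] p(3) by simp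
    next
      case False
      then have d3: "card (V - {c}) \<ge> 3" using d by simp
      obtain x y z t where "p = [x,y,z,t]" using len4[of p] p(3) by auto
      then have P: "is_path V ?E [x,y,z,t]" and M: "deg_monotone V ?E [x,y,z,t]" using p by auto
      from P have inV: "x \<in> V" "y \<in> V" "z \<in> V" "t \<in> V" and dist: "x \<noteq> y" "x \<noteq> z" "x \<noteq> t" "y \<noteq> z" "y \<noteq> t" "z \<noteq> t"
        and e1: "adj ?E x y" and e2: "adj ?E y z" and e3: "adj ?E z t" by (auto simp: path4)
      have Mo: "(deg V ?E x \<le> deg V ?E y \<and> deg V ?E y \<le> deg V ?E z \<and> deg V ?E z \<le> deg V ?E t) \<or>
                (deg V ?E x \<ge> deg V ?E y \<and> deg V ?E y \<ge> deg V ?E z \<and> deg V ?E z \<ge> deg V ?E t)"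
        using M by (simp only: mono4)
      have y3: "y = c \<or> y = u \<or> y = w" using e1 e2 dist A' by auto
      have z3: "z = c \<or> z = u \<or> z = w" using e2 e3 dist A' by auto
      show False using y3 z3 e1 e2 e3 dist A' Mo D' inV d3 uc wc uw by auto
    qed
  qed
  then have "mp V ?E \<le> 3" using mp_le_iff[OF s'] by blast
  with ge show ?thesis by simp
qed



lemma deg_pos_nb: "simple_graph V E \<Longrightarrow> deg V E y \<ge> 1 \<Longrightarrow> \<exists>w. adj E y w"
  unfolding deg_def by (metis (no_types, lifting) Collect_empty_eq adj_symD card.empty not_one_le_zero)

lemma part1:
  assumes s: "simple_graph V E" and c: "connected V E" and sat: "saturated V E"
    and m: "card E \<le> card V" and k: "mp V E = 2"
  shows "\<exists>d\<ge>1. is_star V E d \<and>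
               (d \<ge> 2 \<longrightarrow> (\<forall>u\<in>V. \<forall>v\<in>V. u \<noteq> v \<and> {u, v} \<notin> E \<longrightarrow>
                                mp V (insert {u, v} E) = 3))"
proof -
  have fV: "finite V" using s by (simp add: simple_graph_def)
  have n2: "card V \<ge> 2" using mp_le_card[OF s] k by simp
  have key: "\<And>a b c. adj E a b \<Longrightarrow> adj E b c \<Longrightarrow> a \<noteq> c \<Longrightarrow>
     (deg V E b > deg V E a \<and> deg V E b > deg V E c) \<or> (deg V E b < deg V E a \<and> deg V E b < deg V E c)"
    using key2[OF s k] by blast
  have "\<exists>v\<in>V. deg V E v = 1"
  proof (rule ccontr)
    assume nl: "\<not> (\<exists>v\<in>V. deg V E v = 1)"
    then have all2: "\<forall>y\<in>V. deg V E y = 2" using leaf_or_2reg[OF s c m n2] by blast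
    obtain a where aV: "a \<in> V" using n2 by fastforce
    then obtain x y where xy: "x \<in> V" "y \<in> V" "x \<noteq> y" "\<And>w. adj E a w \<longleftrightarrow> w = x \<or> w = y"
      using deg_two[OF s] all2 by metis
    have "adj E a x" using xy(4)[of x] by blast
    then have "adj E x a" by (rule adj_symD)
    moreover have "adj E a y" using xy(4)[of y] by blast
    ultimately show False using key[of x a y] xy all2 aV by auto
  qed
  then obtain v where vV: "v \<in> V" and dv: "deg V E v = 1" by blast
  obtain q where qV: "q \<in> V" and vq: "\<And>y. adj E v y \<longleftrightarrow> y = q" using deg_one[OF s dv] by blast
  have avq: "adj E v q" using vq by simp
  have aqv: "adj E q v" using adj_symD[OF avq] .
  have vnq: "v \<noteq> q" using adj_irrefl[OF s] avq by auto
  have dq1: "deg V E q \<ge> 1" using nbrs_card2[OF s, of "{v}" q] aqv vV by auto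
  show ?thesis
  proof (cases "deg V E q = 1")
    case True
    obtain q' where qq: "\<And>y. adj E q y \<longleftrightarrow> y = q'" using deg_one[OF s True] by blast
    have "q' = v" using qq[of v] aqv by simp
    have "\<forall>a\<in>{v,q}. \<forall>b. adj E a b \<longrightarrow> b \<in> {v,q}" using vq qq \<open>q' = v\<close> by auto
    then have "V \<subseteq> {v,q}" using closure[OF c, of v "{v,q}"] vV by auto
    then have V2: "V = {v,q}" using vV qV by auto
    have "E = {{v,q}}"
    proof
      show "E \<subseteq> {{v,q}}"
      proof
        fix e assume "e \<in> E"
        then have "e \<subseteq> {v,q}" "card e = 2" using s V2 by (auto simp: simple_graph_def)
        then have "e = {v,q}" using card_seteq[of "{v,q}" e] vnq by auto
        thus "e \<in> {{v,q}}" by simp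
      qed
      show "{{v,q}} \<subseteq> E" using avq by (simp add: adj_def)
    qed
    moreover have "V - {q} = {v}" using V2 vnq by auto
    ultimately have "is_star V E 1" unfolding is_star_def using qV
      by (intro bexI[of _ q]) (auto simp: insert_commute)
    thus ?thesis by auto
  next
    case False
    then have dq2: "deg V E q \<ge> 2" using dq1 by simp
    have qpk: "\<And>y. adj E q y \<Longrightarrow> deg V E y < deg V E q"
    proof -
      fix y assume "adj E q y"
      show "deg V E y < deg V E q"
      proof (cases "y = v")
        case True thus ?thesis using dv dq2 by simp
      next
        case False
        then show ?thesis using key[OF avq \<open>adj E q y\<close>] dv dq2 by auto
      qed
    qed
    show ?thesis
    proof (cases "\<forall>a b. adj E a b \<longrightarrow> a = q \<or> b = q")
      case H: True
      have Es: "E = {{q,l} | l. l \<in> V - {q}}"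
      proof
        show "E \<subseteq> {{q,l} | l. l \<in> V - {q}}"
        proof
          fix e assume eE: "e \<in> E"
          then have "e \<subseteq> V" "card e = 2" using s by (auto simp: simple_graph_def)
          then obtain a b where ab: "e = {a,b}" "a \<noteq> b" by (meson card_2_iff)
          then have "adj E a b" using eE by (simp add: adj_def)
          then have "a = q \<or> b = q" using H by blast
          thus "e \<in> {{q,l} | l. l \<in> V - {q}}" using ab \<open>e \<subseteq> V\<close> by (auto simp: insert_commute)
        qed
        show "{{q,l} | l. l \<in> V - {q}} \<subseteq> E"
        proof
          fix e assume "e \<in> {{q,l} | l. l \<in> V - {q}}"
          then obtain l where l: "e = {q,l}" "l \<in> V" "l \<noteq> q" by auto
          have "deg V E l \<ge> 1" using deg_pos[OF s c l(2) qV] l(3) by simp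
          then obtain w where "adj E l w" using deg_pos_nb[OF s] by blast
          then have "w = q" using H l(3) by blast
          then have "adj E q l" using \<open>adj E l w\<close> adj_symD[of E l q] by blast
          thus "e \<in> E" using l by (simp add: adj_def)
        qed
      qed
      have "V - {q} \<noteq> {}" using vV vnq by auto
      then have d1: "card (V - {q}) \<ge> 1" using fV by (simp add: Suc_le_eq card_gt_0_iff)
      have "is_star V E (card (V - {q}))" unfolding is_star_def using qV Es by blast
      moreover have "card (V - {q}) \<ge> 2 \<longrightarrow> (\<forall>u\<in>V. \<forall>w\<in>V. u \<noteq> w \<and> {u, w} \<notin> E \<longrightarrow> mp V (insert {u, w} E) = 3)"
        using star_add[OF s qV Es] by blast
      ultimately show ?thesis using d1 by blast
    next
      case False
      then obtain a0 b0 where ab0: "adj E a0 b0" "a0 \<noteq> q" "b0 \<noteq> q" by blast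
      have "\<exists>a b. adj E a b \<and> a \<noteq> q \<and> b \<noteq> q \<and> deg V E a \<le> deg V E b"
      proof (cases "deg V E a0 \<le> deg V E b0")
        case True thus ?thesis using ab0 by blast
      next
        case False thus ?thesis using ab0 adj_symD[OF ab0(1)] by (intro exI[of _ b0] exI[of _ a0]) auto
      qed
      then obtain a b where ab: "adj E a b" "a \<noteq> q" "b \<noteq> q" "deg V E a \<le> deg V E b" by blast
      have aV: "a \<in> V" and bV: "b \<in> V" using adj_V[OF s ab(1)] by auto
      have anb: "a \<noteq> b" using adj_irrefl[OF s] ab(1) by auto
      have da1: "deg V E a \<ge> 1" using nbrs_card2[OF s, of "{b}" a] ab(1) bV by auto
      have db1: "deg V E b \<ge> 1" using nbrs_card2[OF s, of "{a}" b] adj_symD[OF ab(1)] aV by auto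
      have lt: "deg V E a < deg V E b"
      proof (rule ccontr)
        assume "\<not> deg V E a < deg V E b"
        then have eq: "deg V E a = deg V E b" using ab(4) by simp
        show False
        proof (cases "deg V E b \<ge> 2")
          case True
          then obtain c' where "adj E b c'" "c' \<noteq> a" using deg_ge2[OF s True aV] by blast
          then show False using key[OF ab(1) \<open>adj E b c'\<close>] eq by auto
        next
          case False
          then have "deg V E b = 1" "deg V E a = 1" using db1 eq by auto
          then obtain a' b' where a': "\<And>y. adj E a y \<longleftrightarrow> y = a'" and b': "\<And>y. adj E b y \<longleftrightarrow> y = b'"
            using deg_one[OF s] by metis
          have "a' = b" using a'[of b] ab(1) by simp
          moreover have "b' = a" using b'[of a] adj_symD[OF ab(1)] by simp
          ultimately have "\<forall>x\<in>{a,b}. \<forall>y. adj E x y \<longrightarrow> y \<in> {a,b}" using a' b' by auto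
          then have "V \<subseteq> {a,b}" using closure[OF c, of a "{a,b}"] aV by auto
          thus False using qV ab by auto
        qed
      qed
      have bpk: "\<And>y. adj E b y \<Longrightarrow> deg V E y < deg V E b"
      proof -
        fix y assume "adj E b y"
        show "deg V E y < deg V E b"
        proof (cases "y = a")
          case True thus ?thesis using lt by simp
        next
          case False
          then show ?thesis using key[OF ab(1) \<open>adj E b y\<close>] lt by auto
        qed
      qed
      have b2: "deg V E b \<ge> 2" using lt da1 by simp
      have bv: "b \<noteq> v" using b2 dv by auto
      have q3: "deg V E q \<ge> 3"
      proof (rule ccontr)
        assume "\<not> deg V E q \<ge> 3"
        then have "deg V E q = 2" using dq2 by simp
        then obtain r1 r2 where r: "r1 \<noteq> r2" "\<And>y. adj E q y \<longleftrightarrow> y = r1 \<or> y = r2"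
          using deg_two[OF s] by metis
        have "v = r1 \<or> v = r2" using r(2)[of v] aqv by simp
        then obtain r where rr: "\<And>y. adj E q y \<longleftrightarrow> y = v \<or> y = r" using r by metis
        have aqr: "adj E q r" using rr[of r] by simp
        have rV: "r \<in> V" using adj_V[OF s aqr] by blast
        have "deg V E r \<ge> 1" using nbrs_card2[OF s, of "{q}" r] adj_symD[OF aqr] qV by auto
        moreover have "deg V E r < 2" using qpk[OF aqr] \<open>deg V E q = 2\<close> by simp
        ultimately have "deg V E r = 1" by simp
        then obtain r' where r': "\<And>y. adj E r y \<longleftrightarrow> y = r'" using deg_one[OF s] by metis
        have "r' = q" using r'[of q] adj_symD[OF aqr] by simp
        have "\<forall>x\<in>{v,q,r}. \<forall>y. adj E x y \<longrightarrow> y \<in> {v,q,r}" using vq rr r' \<open>r' = q\<close> by auto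
        then have "V \<subseteq> {v,q,r}" using closure[OF c, of v "{v,q,r}"] vV by auto
        then have "a \<in> {v,r}" "b \<in> {v,r}" using aV bV ab by auto
        then show False using ab(1) vq r' \<open>r' = q\<close> ab(2,3) anb by auto
      qed
      have "\<not> (\<exists>p. is_path V (insert {v,b} E) p \<and> deg_monotone V (insert {v,b} E) p \<and> length p = Suc 2)"
        using safe2[OF s k vV bV bv ab(3) vq q3 b2 dv qpk bpk] by blast
      moreover have "{v,b} \<notin> E" using vq ab(3) by (simp add: adj_def)
      ultimately show ?thesis using sat_contra[OF s sat k vV bV bv[symmetric]] by blast
    qed
  qed
qed



lemma path4_rev: "is_path V E [x,y,z,t] \<Longrightarrow> is_path V E [t,z,y,x]"
  by (auto simp: path4 adj_sym)

lemma mono4_rev: "deg_monotone V E [x,y,z,t] \<Longrightarrow> deg_monotone V E [t,z,y,x]"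
  by (auto simp: mono4)

lemma path4_trap:
  assumes P: "is_path V E [x,y,z,t]" and cl: "\<forall>a\<in>S. \<forall>b. adj E a b \<longrightarrow> b \<in> S \<or> b \<in> R"
    and fS: "finite S" and cS: "card S \<le> 3" and R: "x \<notin> R" "y \<notin> R" "z \<notin> R" "t \<notin> R"
    and ne: "x \<in> S \<or> y \<in> S \<or> z \<in> S \<or> t \<in> S"
  shows False
proof -
  from P have dist: "x \<noteq> y" "x \<noteq> z" "x \<noteq> t" "y \<noteq> z" "y \<noteq> t" "z \<noteq> t"
    and e1: "adj E x y" and e2: "adj E y z" and e3: "adj E z t" by (auto simp: path4)
  have e1': "adj E y x" using e1 by (rule adj_symD)
  have e2': "adj E z y" using e2 by (rule adj_symD)
  have e3': "adj E t z" using e3 by (rule adj_symD)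
  have st: "\<And>a b. a \<in> S \<Longrightarrow> adj E a b \<Longrightarrow> b \<notin> R \<Longrightarrow> b \<in> S" using cl by blast
  have xy: "x \<in> S \<Longrightarrow> y \<in> S" using st[OF _ e1] R(2) by blast
  have yx: "y \<in> S \<Longrightarrow> x \<in> S" using st[OF _ e1'] R(1) by blast
  have yz: "y \<in> S \<Longrightarrow> z \<in> S" using st[OF _ e2] R(3) by blast
  have zy: "z \<in> S \<Longrightarrow> y \<in> S" using st[OF _ e2'] R(2) by blast
  have zt: "z \<in> S \<Longrightarrow> t \<in> S" using st[OF _ e3] R(4) by blast
  have tz: "t \<in> S \<Longrightarrow> z \<in> S" using st[OF _ e3'] R(3) by blast
  have "x \<in> S" "y \<in> S" "z \<in> S" "t \<in> S" using ne xy yx yz zy zt tz by blast+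
  then have "{x,y,z,t} \<subseteq> S" by auto
  then have "card {x,y,z,t} \<le> card S" using fS by (rule card_mono[rotated])
  moreover have "card {x,y,z,t} = 4" using dist by auto
  ultimately show False using cS by simp
qed


lemma safe3a:
  assumes s: "simple_graph V E"
    and no4: "\<And>a b c d. is_path V E [a,b,c,d] \<Longrightarrow> \<not> deg_monotone V E [a,b,c,d]"
    and vV: "v \<in> V" and qV: "q \<in> V" and rV: "r \<in> V"
    and vq: "\<And>y. adj E v y \<longleftrightarrow> y = q" and qn: "\<And>y. adj E q y \<longleftrightarrow> y = v \<or> y = r" and rv: "r \<noteq> v"
    and dv: "deg V E v = 1" and dq: "deg V E q = 2"
  shows "\<not> (\<exists>p. is_path V (insert {v,r} E) p \<and> deg_monotone V (insert {v,r} E) p \<and> length p = Suc 3)"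
proof
  let ?E = "insert {v,r} E"
  let ?D = "deg V E" and ?D' = "deg V ?E"
  assume "\<exists>p. is_path V ?E p \<and> deg_monotone V ?E p \<and> length p = Suc 3"
  then obtain p where p: "is_path V ?E p" "deg_monotone V ?E p" "length p = 4" by auto
  then obtain x0 y0 z0 t0 where "p = [x0,y0,z0,t0]" using len4[of p] by auto
  then have P0: "is_path V ?E [x0,y0,z0,t0]" and M0: "deg_monotone V ?E [x0,y0,z0,t0]" using p by auto
  have vnq: "v \<noteq> q" using vq[of v] adj_irrefl[OF s, of v] by auto
  have rq: "r \<noteq> q" using qn[of q] adj_irrefl[OF s, of q] by auto
  have ne: "{v,r} \<notin> E" using vq[of r] rq by (simp add: adj_def)
  have D': "\<And>w. ?D' w = ?D w + (if w = v \<or> w = r then 1 else 0)"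
    using deg_insert[OF s vV rV rv[symmetric] ne] by blast
  have arq: "adj E r q" using qn[of r] adj_symD[of E q r] by simp
  have S: "\<And>y. adj E r y \<Longrightarrow> y \<noteq> q \<Longrightarrow> ?D y < ?D r \<and> y \<noteq> v \<and> y \<noteq> r \<and> y \<in> V"
  proof -
    fix y assume ry: "adj E r y" "y \<noteq> q"
    have yv: "y \<noteq> v" using ry(1) vq[of r] adj_symD[of E r y] rq by auto
    have yr: "y \<noteq> r" using ry adj_irrefl[OF s] by auto
    have yV: "y \<in> V" using adj_V[OF s ry(1)] by auto
    have "is_path V E [v,q,r,y]" using vV qV rV yV vnq rv yv rq ry yr vq[of q] qn[of r] by (auto simp: path4)
    then have "\<not> deg_monotone V E [v,q,r,y]" by (rule no4)
    moreover have "?D r \<ge> 2"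
    proof -
      have "card {q,y} \<le> ?D r" using nbrs_card2[OF s, of "{q,y}" r] qV yV arq ry by auto
      thus ?thesis using ry(2) by simp
    qed
    ultimately have "?D y < ?D r" using dv dq by (auto simp: mono4)
    thus "?D y < ?D r \<and> y \<noteq> v \<and> y \<noteq> r \<and> y \<in> V" using yv yr yV by simp
  qed
  have Av: "\<And>y. adj ?E v y \<longleftrightarrow> y = q \<or> y = r" using vq by (auto simp: adj_insert)
  have Av2: "\<And>y. adj ?E y v \<longleftrightarrow> y = q \<or> y = r" using Av adj_sym by metis
  have Aq: "\<And>y. adj ?E q y \<longleftrightarrow> y = v \<or> y = r" using qn vnq rq by (auto simp: adj_insert)
  have Aq2: "\<And>y. adj ?E y q \<longleftrightarrow> y = v \<or> y = r" using Aq adj_sym by metis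
  have Ao: "\<And>a b. a \<noteq> v \<Longrightarrow> a \<noteq> r \<Longrightarrow> adj ?E a b \<longleftrightarrow> adj E a b" by (auto simp: adj_insert)
  have Ao2: "\<And>a b. b \<noteq> v \<Longrightarrow> b \<noteq> r \<Longrightarrow> adj ?E a b \<longleftrightarrow> adj E a b" by (auto simp: adj_insert)
  have Dv: "?D' v = 2" and Dq: "?D' q = 2" and Dr: "?D' r = ?D r + 1" using D' dv dq vnq rq rv by auto
  have Do: "\<And>w. w \<noteq> v \<Longrightarrow> w \<noteq> r \<Longrightarrow> ?D' w = ?D w" using D' by auto
  have startr: False if P: "is_path V ?E [x,y,z,t]" and M: "deg_monotone V ?E [x,y,z,t]" and xr: "x = r" for x y z t
  proof -
    from P have dist: "x \<noteq> y" "x \<noteq> z" "x \<noteq> t" "y \<noteq> z" "y \<noteq> t" "z \<noteq> t"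
      and e1: "adj ?E x y" and e2: "adj ?E y z" and e3: "adj ?E z t" and inV: "x \<in> V" "y \<in> V" "z \<in> V" "t \<in> V"
      by (auto simp: path4)
    show False
    proof (cases "y = v \<or> y = q")
      case True
      then have "z = v \<or> z = q" using e2 Av[of z] Aq[of z] dist xr by auto
      then have "t = v \<or> t = q" using e3 Av[of t] Aq[of t] dist xr by auto
      then show False using \<open>z = v \<or> z = q\<close> True dist by auto
    next
      case yP: False
      have ry: "adj E r y" using e1 xr Ao2[of y r] yP dist by auto
      have Sy: "?D y < ?D r" "y \<noteq> v" "y \<noteq> r" using S[OF ry] yP by auto
      have zP: "z \<noteq> v" "z \<noteq> q" using e2 yP xr dist Av2[of y] Aq2[of y] by auto
      have zr: "z \<noteq> r" using dist xr by auto
      have yz: "adj E y z" using e2 Ao[of y z] Sy by auto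
      have tP: "t \<noteq> v" "t \<noteq> q" using e3 zP zr dist Av2[of z] Aq2[of z] by auto
      have tr: "t \<noteq> r" using dist xr by auto
      have zt: "adj E z t" using e3 Ao[of z t] zP zr by auto
      have Mo: "(?D' x \<le> ?D' y \<and> ?D' y \<le> ?D' z \<and> ?D' z \<le> ?D' t) \<or> (?D' x \<ge> ?D' y \<and> ?D' y \<ge> ?D' z \<and> ?D' z \<ge> ?D' t)"
        using M by (simp only: mono4)
      have "?D' x = ?D r + 1" "?D' y = ?D y" "?D' z = ?D z" "?D' t = ?D t"
        using Dr xr Do Sy zP zr tP tr by auto
      then have "?D r \<ge> ?D y \<and> ?D y \<ge> ?D z \<and> ?D z \<ge> ?D t" using Mo Sy by auto
      moreover have "is_path V E [r,y,z,t]" using ry yz zt dist xr inV by (auto simp: path4)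
      ultimately show False using no4[of r y z t] by (auto simp: mono4)
    qed
  qed
  show False
  proof (cases "r \<in> {x0,y0,z0,t0}")
    case False
    from P0 have dist: "x0 \<noteq> y0" "x0 \<noteq> z0" "x0 \<noteq> t0" "y0 \<noteq> z0" "y0 \<noteq> t0" "z0 \<noteq> t0"
      and e1: "adj ?E x0 y0" and e2: "adj ?E y0 z0" and e3: "adj ?E z0 t0" and inV: "x0 \<in> V" "y0 \<in> V" "z0 \<in> V" "t0 \<in> V"
      by (auto simp: path4)
    have c2: "card {v,q} \<le> 3" by (cases "v = q") auto
    have cl: "\<forall>a\<in>{v,q}. \<forall>b. adj ?E a b \<longrightarrow> b \<in> {v,q} \<or> b \<in> {r}" using Av Aq by auto
    have nv: "v \<notin> {x0,y0,z0,t0}" "q \<notin> {x0,y0,z0,t0}"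
      using path4_trap[OF P0 cl] False c2 by auto
    have "is_path V E [x0,y0,z0,t0]" using e1 e2 e3 Ao nv False dist inV by (auto simp: path4)
    moreover have "deg_monotone V E [x0,y0,z0,t0]" using M0 Do nv False by (auto simp: mono4)
    ultimately show False using no4 by blast
  next
    case rin: True
    show False
    proof (cases "?D r = 1")
      case True
      have Ar: "\<And>y. adj ?E r y \<longleftrightarrow> y = q \<or> y = v"
      proof -
        obtain r' where r': "\<And>y. adj E r y \<longleftrightarrow> y = r'" using deg_one[OF s True] by metis
        have "r' = q" using r'[of q] arq by simp
        thus "\<And>y. adj ?E r y \<longleftrightarrow> y = q \<or> y = v" using r' rv by (auto simp: adj_insert)
      qed
      from P0 have dist: "x0 \<noteq> y0" "x0 \<noteq> z0" "x0 \<noteq> t0" "y0 \<noteq> z0" "y0 \<noteq> t0" "z0 \<noteq> t0"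
        and e1: "adj ?E x0 y0" and e2: "adj ?E y0 z0" and e3: "adj ?E z0 t0"
        by (auto simp: path4)
      have cl: "\<forall>a\<in>{v,q,r}. \<forall>b. adj ?E a b \<longrightarrow> b \<in> {v,q,r} \<or> b \<in> {}" using Av Aq Ar by auto
      have c3: "card {v,q,r} \<le> 3" by (simp add: card_insert_if)
      show False using path4_trap[OF P0 cl _ c3] rin by auto
    next
      case False
      have "?D r \<ge> 1" using nbrs_card2[OF s, of "{q}" r] arq qV by auto
      then have Dr2: "?D' r \<ge> 3" using False Dr by simp
      have small: "\<And>y. adj ?E r y \<Longrightarrow> ?D' y < ?D' r"
      proof -
        fix y assume "adj ?E r y"
        then have "y = v \<or> y = q \<or> (adj E r y \<and> y \<noteq> q)" by (auto simp: adj_insert)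
        then show "?D' y < ?D' r" using Dv Dq Dr2 S Do Dr by fastforce
      qed
      from P0 have dist: "x0 \<noteq> y0" "x0 \<noteq> z0" "x0 \<noteq> t0" "y0 \<noteq> z0" "y0 \<noteq> t0" "z0 \<noteq> t0"
        and e1: "adj ?E x0 y0" and e2: "adj ?E y0 z0" and e3: "adj ?E z0 t0"
        by (auto simp: path4)
      have Mo: "(?D' x0 \<le> ?D' y0 \<and> ?D' y0 \<le> ?D' z0 \<and> ?D' z0 \<le> ?D' t0) \<or> (?D' x0 \<ge> ?D' y0 \<and> ?D' y0 \<ge> ?D' z0 \<and> ?D' z0 \<ge> ?D' t0)"
        using M0 by (simp only: mono4)
      have "y0 \<noteq> r"
      proof
        assume "y0 = r"
        then have "?D' x0 < ?D' y0" "?D' z0 < ?D' y0" using small e1 e2 adj_sym by metis+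
        then show False using Mo by linarith
      qed
      moreover have "z0 \<noteq> r"
      proof
        assume "z0 = r"
        then have "?D' y0 < ?D' z0" "?D' t0 < ?D' z0" using small e2 e3 adj_sym by metis+
        then show False using Mo by linarith
      qed
      ultimately have "x0 = r \<or> t0 = r" using rin by auto
      then show False
      proof
        assume "x0 = r" thus False using startr[OF P0 M0] by blast
      next
        assume "t0 = r" thus False using startr[OF path4_rev[OF P0] mono4_rev[OF M0]] by blast
      qed
    qed
  qed
qed



lemma safe3b:
  assumes s: "simple_graph V E"
    and no4: "\<And>a b c d. is_path V E [a,b,c,d] \<Longrightarrow> \<not> deg_monotone V E [a,b,c,d]"
    and vV: "v \<in> V" and xV: "x \<in> V" and qV: "q \<in> V"
    and vq: "\<And>y. adj E v y \<longleftrightarrow> y = q" and xv: "x \<noteq> v" and xq: "x \<noteq> q"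
    and dv: "deg V E v = 1" and q3: "deg V E q \<ge> 3" and xmax: "\<And>y. y \<in> V \<Longrightarrow> deg V E y \<le> deg V E x"
  shows "\<not> (\<exists>p. is_path V (insert {v,x} E) p \<and> deg_monotone V (insert {v,x} E) p \<and> length p = Suc 3)"
proof
  let ?E = "insert {v,x} E"
  let ?D = "deg V E" and ?D' = "deg V ?E"
  assume "\<exists>p. is_path V ?E p \<and> deg_monotone V ?E p \<and> length p = Suc 3"
  then obtain p where p: "is_path V ?E p" "deg_monotone V ?E p" "length p = 4" by auto
  then obtain x0 y0 z0 t0 where "p = [x0,y0,z0,t0]" using len4[of p] by auto
  then have P0: "is_path V ?E [x0,y0,z0,t0]" and M0: "deg_monotone V ?E [x0,y0,z0,t0]" using p by auto
  have ne: "{v,x} \<notin> E" using vq[of x] xq by (simp add: adj_def)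
  have D': "\<And>w. ?D' w = ?D w + (if w = v \<or> w = x then 1 else 0)"
    using deg_insert[OF s vV xV xv[symmetric] ne] by blast
  have x3: "?D x \<ge> 3" using xmax[OF qV] q3 by simp
  have Dv: "?D' v = 2" and Dx: "?D' x = ?D x + 1" using D' dv xv by auto
  have Do: "\<And>w. w \<noteq> v \<Longrightarrow> w \<noteq> x \<Longrightarrow> ?D' w = ?D w" using D' by auto
  have Dq: "?D' q = ?D q" using Do xq vq[of v] adj_irrefl[OF s, of v] by auto
  have big: "\<And>y. y \<in> V \<Longrightarrow> y \<noteq> x \<Longrightarrow> ?D' y < ?D' x"
  proof -
    fix y assume "y \<in> V" "y \<noteq> x"
    then show "?D' y < ?D' x" using Dv Dx Do[of y] xmax[of y] x3 by (cases "y = v") auto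
  qed
  have Av: "\<And>y. adj ?E v y \<longleftrightarrow> y = q \<or> y = x" using vq by (auto simp: adj_insert)
  have Av2: "\<And>y. adj ?E y v \<longleftrightarrow> y = q \<or> y = x" using Av adj_sym by metis
  have Ao: "\<And>a b. a \<noteq> v \<Longrightarrow> a \<noteq> x \<Longrightarrow> adj ?E a b \<longleftrightarrow> adj E a b" by (auto simp: adj_insert)
  have Ao2: "\<And>a b. b \<noteq> v \<Longrightarrow> b \<noteq> x \<Longrightarrow> adj ?E a b \<longleftrightarrow> adj E a b" by (auto simp: adj_insert)
  have notint: False if P: "is_path V ?E [a,b,c,d]" and M: "deg_monotone V ?E [a,b,c,d]" and bx: "b = x \<or> c = x" for a b c d
  proof -
    from P have dist: "a \<noteq> b" "a \<noteq> c" "a \<noteq> d" "b \<noteq> c" "b \<noteq> d" "c \<noteq> d"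
      and inV: "a \<in> V" "b \<in> V" "c \<in> V" "d \<in> V" by (auto simp: path4)
    have Mo: "(?D' a \<le> ?D' b \<and> ?D' b \<le> ?D' c \<and> ?D' c \<le> ?D' d) \<or> (?D' a \<ge> ?D' b \<and> ?D' b \<ge> ?D' c \<and> ?D' c \<ge> ?D' d)"
      using M by (simp only: mono4)
    from bx show False
    proof
      assume "b = x"
      then have "?D' a < ?D' b" "?D' c < ?D' b" using big inV dist by auto
      then show False using Mo by linarith
    next
      assume "c = x"
      then have "?D' b < ?D' c" "?D' d < ?D' c" using big inV dist by auto
      then show False using Mo by linarith
    qed
  qed
  have startx: False if P: "is_path V ?E [a,b,c,d]" and M: "deg_monotone V ?E [a,b,c,d]" and ax: "a = x" for a b c d
  proof -
    from P have dist: "a \<noteq> b" "a \<noteq> c" "a \<noteq> d" "b \<noteq> c" "b \<noteq> d" "c \<noteq> d"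
      and e1: "adj ?E a b" and e2: "adj ?E b c" and e3: "adj ?E c d" and inV: "a \<in> V" "b \<in> V" "c \<in> V" "d \<in> V"
      by (auto simp: path4)
    have Mo: "(?D' a \<le> ?D' b \<and> ?D' b \<le> ?D' c \<and> ?D' c \<le> ?D' d) \<or> (?D' a \<ge> ?D' b \<and> ?D' b \<ge> ?D' c \<and> ?D' c \<ge> ?D' d)"
      using M by (simp only: mono4)
    have "?D' b < ?D' a" using big inV dist ax by auto
    then have dec: "?D' a \<ge> ?D' b \<and> ?D' b \<ge> ?D' c \<and> ?D' c \<ge> ?D' d" using Mo by linarith
    show False
    proof (cases "b = v")
      case True
      then have "c = q" using e2 Av[of c] dist ax by auto
      then show False using dec True Dv Dq q3 by simp
    next
      case bv: False
      have ab: "adj E a b" using e1 Ao2[of b a] bv dist ax by auto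
      have cv: "c \<noteq> v"
      proof
        assume "c = v"
        then have "d = q \<or> d = x" using e3 Av[of d] by auto
        moreover have "b = q \<or> b = x" using e2 Av2[of b] \<open>c = v\<close> by auto
        ultimately show False using dist ax by auto
      qed
      have cx: "c \<noteq> x" using dist ax by auto
      have bc: "adj E b c" using e2 Ao2[of c b] cv cx by auto
      have dx: "d \<noteq> x" using dist ax by auto
      show False
      proof (cases "d = v")
        case True
        then have "c = q" using e3 Av2[of c] cx by auto
        have "is_path V E [a,b,c,v]" using ab bc \<open>c = q\<close> vq[of q] adj_symD[of E v q] dist inV True by (auto simp: path4)
        moreover have "deg_monotone V E [a,b,c,v]"
          using dec Dx ax Do[of b] Do[of c] bv cv cx dist True dv Dv xmax[OF inV(2)] by (auto simp: mono4)
        ultimately show False using no4 by blast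
      next
        case False
        have cd: "adj E c d" using e3 Ao2[of d c] False dx by auto
        have "is_path V E [a,b,c,d]" using ab bc cd dist inV by (auto simp: path4)
        moreover have "deg_monotone V E [a,b,c,d]"
          using dec Dx ax Do[of b] Do[of c] Do[of d] bv cv cx dx False dist xmax[OF inV(2)] by (auto simp: mono4)
        ultimately show False using no4 by blast
      qed
    qed
  qed
  have startv: False if P: "is_path V ?E [a,b,c,d]" and M: "deg_monotone V ?E [a,b,c,d]" and av: "a = v"
     and nx: "x \<notin> {a,b,c,d}" for a b c d
  proof -
    from P have dist: "a \<noteq> b" "a \<noteq> c" "a \<noteq> d" "b \<noteq> c" "b \<noteq> d" "c \<noteq> d"
      and e1: "adj ?E a b" and e2: "adj ?E b c" and e3: "adj ?E c d" and inV: "a \<in> V" "b \<in> V" "c \<in> V" "d \<in> V"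
      by (auto simp: path4)
    have Mo: "(?D' a \<le> ?D' b \<and> ?D' b \<le> ?D' c \<and> ?D' c \<le> ?D' d) \<or> (?D' a \<ge> ?D' b \<and> ?D' b \<ge> ?D' c \<and> ?D' c \<ge> ?D' d)"
      using M by (simp only: mono4)
    have bq: "b = q" using e1 Av[of b] av nx by auto
    have cv: "c \<noteq> v" "d \<noteq> v" using dist av by auto
    have bc: "adj E b c" using e2 Ao2[of c b] cv nx by auto
    have cd: "adj E c d" using e3 Ao2[of d c] cv nx by auto
    have inc: "?D' a \<le> ?D' b \<and> ?D' b \<le> ?D' c \<and> ?D' c \<le> ?D' d"
      using Mo av Dv bq Dq q3 by auto
    have "is_path V E [a,b,c,d]" using bc cd bq av vq[of q] dist inV by (auto simp: path4)
    moreover have "deg_monotone V E [a,b,c,d]"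
      using inc av Dv dv bq Dq Do[of c] Do[of d] cv nx by (auto simp: mono4)
    ultimately show False using no4 by blast
  qed
  show False
  proof (cases "x \<in> {x0,y0,z0,t0}")
    case True
    then consider "x0 = x" | "y0 = x \<or> z0 = x" | "t0 = x" by auto
    then show False
    proof cases
      case 1 thus False using startx[OF P0 M0] by blast
    next
      case 2 thus False using notint[OF P0 M0] by blast
    next
      case 3 thus False using startx[OF path4_rev[OF P0] mono4_rev[OF M0]] by blast
    qed
  next
    case nx: False
    from P0 have dist: "x0 \<noteq> y0" "x0 \<noteq> z0" "x0 \<noteq> t0" "y0 \<noteq> z0" "y0 \<noteq> t0" "z0 \<noteq> t0"
      and e1: "adj ?E x0 y0" and e2: "adj ?E y0 z0" and e3: "adj ?E z0 t0" and inV: "x0 \<in> V" "y0 \<in> V" "z0 \<in> V" "t0 \<in> V"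
      by (auto simp: path4)
    have "y0 \<noteq> v"
    proof
      assume "y0 = v"
      then have "x0 = q \<or> x0 = x" "z0 = q \<or> z0 = x" using e1 e2 Av[of z0] Av2[of x0] by auto
      then show False using nx dist by auto
    qed
    moreover have "z0 \<noteq> v"
    proof
      assume "z0 = v"
      then have "y0 = q \<or> y0 = x" "t0 = q \<or> t0 = x" using e2 e3 Av[of t0] Av2[of y0] by auto
      then show False using nx dist by auto
    qed
    moreover have "x0 \<noteq> v" using startv[OF P0 M0] nx by blast
    moreover have "t0 \<noteq> v" using startv[OF path4_rev[OF P0] mono4_rev[OF M0]] nx by blast
    ultimately have nv: "v \<notin> {x0,y0,z0,t0}" by auto
    have "is_path V E [x0,y0,z0,t0]" using e1 e2 e3 Ao[of x0 y0] Ao[of y0 z0] Ao[of z0 t0] nv nx dist inV by (auto simp: path4)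
    moreover have "deg_monotone V E [x0,y0,z0,t0]" using M0 Do[of x0] Do[of y0] Do[of z0] Do[of t0] nv nx by (auto simp: mono4)
    ultimately show False using no4 by blast
  qed
qed



lemma ll_pos12:
  assumes s: "simple_graph V E"
    and vV: "v \<in> V" and wV: "w \<in> V" and qV: "q \<in> V" and vw: "v \<noteq> w"
    and vq: "\<And>y. adj E v y \<longleftrightarrow> y = q" and wq: "\<And>y. adj E w y \<longleftrightarrow> y = q"
    and dv: "deg V E v = 1" and dw: "deg V E w = 1" and q3: "deg V E q \<ge> 3"
    and qmax: "\<forall>y\<in>V. y \<noteq> q \<longrightarrow> deg V E y < deg V E q"
    and P: "is_path V (insert {v,w} E) [a,b,c,d]" and M: "deg_monotone V (insert {v,w} E) [a,b,c,d]"
    and pos: "a = v \<or> b = v"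
  shows False
proof -
  let ?E = "insert {v,w} E"
  let ?D = "deg V E" and ?D' = "deg V ?E"
  have qv: "q \<noteq> v" using vq[of v] adj_irrefl[OF s, of v] by auto
  have qw: "q \<noteq> w" using wq[of w] adj_irrefl[OF s, of w] by auto
  have ne: "{v,w} \<notin> E" using vq[of w] qw by (simp add: adj_def)
  have D': "\<And>u. ?D' u = ?D u + (if u = v \<or> u = w then 1 else 0)"
    using deg_insert[OF s vV wV vw ne] by blast
  have Dv: "?D' v = 2" and Dw: "?D' w = 2" and Dq: "?D' q = ?D q" using D' dv dw qv qw by auto
  have Do: "\<And>u. u \<noteq> v \<Longrightarrow> u \<noteq> w \<Longrightarrow> ?D' u = ?D u" using D' by auto
  have Av: "\<And>y. adj ?E v y \<longleftrightarrow> y = q \<or> y = w" using vq by (auto simp: adj_insert)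
  have Aw: "\<And>y. adj ?E w y \<longleftrightarrow> y = q \<or> y = v" using wq by (auto simp: adj_insert)
  have Av2: "\<And>y. adj ?E y v \<longleftrightarrow> y = q \<or> y = w" using Av adj_sym by metis
  have Aw2: "\<And>y. adj ?E y w \<longleftrightarrow> y = q \<or> y = v" using Aw adj_sym by metis
  from P have dist: "a \<noteq> b" "a \<noteq> c" "a \<noteq> d" "b \<noteq> c" "b \<noteq> d" "c \<noteq> d"
    and e1: "adj ?E a b" and e2: "adj ?E b c" and e3: "adj ?E c d" and inV: "a \<in> V" "b \<in> V" "c \<in> V" "d \<in> V"
    by (auto simp: path4)
  have Mo: "(?D' a \<le> ?D' b \<and> ?D' b \<le> ?D' c \<and> ?D' c \<le> ?D' d) \<or> (?D' a \<ge> ?D' b \<and> ?D' b \<ge> ?D' c \<and> ?D' c \<ge> ?D' d)"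
    using M by (simp only: mono4)
  have small: "\<And>u. u \<in> V \<Longrightarrow> u \<noteq> q \<Longrightarrow> ?D' u < ?D' q"
  proof -
    fix u assume "u \<in> V" "u \<noteq> q"
    then show "?D' u < ?D' q" using Dv Dw Dq Do[of u] qmax q3 by (cases "u = v \<or> u = w") auto
  qed
  from pos show False
  proof
    assume av: "a = v"
    then have "b = q \<or> b = w" using e1 Av[of b] by auto
    then show False
    proof
      assume bw: "b = w"
      then have "c = q" using e2 Aw[of c] av dist by auto
      then have "d \<noteq> q" using dist by auto
      then have "?D' d < ?D' q" using small inV by auto
      then show False using Mo av bw \<open>c = q\<close> Dv Dw Dq q3 by auto
    next
      assume bq: "b = q"
      have "c \<noteq> q" using dist bq by auto
      then have "?D' c < ?D' q" using small inV by auto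
      then show False using Mo av bq Dv Dq q3 by auto
    qed
  next
    assume bv: "b = v"
    then have "a = q \<or> a = w" "c = q \<or> c = w" using e1 e2 Av[of c] Av2[of a] by auto
    then have ac: "(a = q \<and> c = w) \<or> (a = w \<and> c = q)" using dist by auto
    then show False
    proof
      assume "a = q \<and> c = w"
      then have "d = q \<or> d = v" using e3 Aw[of d] by auto
      then show False using dist \<open>a = q \<and> c = w\<close> bv by auto
    next
      assume acq: "a = w \<and> c = q"
      then have "d \<noteq> q" using dist by auto
      then have "?D' d < ?D' q" using small inV by auto
      then show False using Mo acq bv Dv Dw Dq q3 by auto
    qed
  qed
qed

lemma safe3c:
  assumes s: "simple_graph V E"
    and no4: "\<And>a b c d. is_path V E [a,b,c,d] \<Longrightarrow> \<not> deg_monotone V E [a,b,c,d]"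
    and vV: "v \<in> V" and wV: "w \<in> V" and qV: "q \<in> V" and vw: "v \<noteq> w"
    and vq: "\<And>y. adj E v y \<longleftrightarrow> y = q" and wq: "\<And>y. adj E w y \<longleftrightarrow> y = q"
    and dv: "deg V E v = 1" and dw: "deg V E w = 1" and q3: "deg V E q \<ge> 3"
    and qmax: "\<And>y. y \<in> V \<Longrightarrow> y \<noteq> q \<Longrightarrow> deg V E y < deg V E q"
  shows "\<not> (\<exists>p. is_path V (insert {v,w} E) p \<and> deg_monotone V (insert {v,w} E) p \<and> length p = Suc 3)"
proof
  let ?E = "insert {v,w} E"
  let ?D = "deg V E" and ?D' = "deg V ?E"
  assume "\<exists>p. is_path V ?E p \<and> deg_monotone V ?E p \<and> length p = Suc 3"
  then obtain p where p: "is_path V ?E p" "deg_monotone V ?E p" "length p = 4" by auto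
  then obtain x0 y0 z0 t0 where "p = [x0,y0,z0,t0]" using len4[of p] by auto
  then have P0: "is_path V ?E [x0,y0,z0,t0]" and M0: "deg_monotone V ?E [x0,y0,z0,t0]" using p by auto
  have sw: "insert {w,v} E = ?E" by (simp add: insert_commute)
  have qmax': "\<forall>y\<in>V. y \<noteq> q \<longrightarrow> deg V E y < deg V E q" using qmax by blast
  note L1 = ll_pos12[OF s vV wV qV vw vq wq dv dw q3 qmax']
  note L2 = ll_pos12[OF s wV vV qV vw[symmetric] wq vq dw dv q3 qmax', unfolded sw]
  have "v \<notin> {x0,y0,z0,t0}"
    using L1[OF P0 M0] L1[OF path4_rev[OF P0] mono4_rev[OF M0]] by auto
  moreover have "w \<notin> {x0,y0,z0,t0}"
    using L2[OF P0 M0] L2[OF path4_rev[OF P0] mono4_rev[OF M0]] by auto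
  moreover have qv: "q \<noteq> v" using vq[of v] adj_irrefl[OF s, of v] by auto
  moreover have qw: "q \<noteq> w" using wq[of w] adj_irrefl[OF s, of w] by auto
  moreover have ne: "{v,w} \<notin> E" using vq[of w] qw by (simp add: adj_def)
  ultimately have nv: "v \<notin> {x0,y0,z0,t0}" "w \<notin> {x0,y0,z0,t0}" and
    Do: "\<And>u. u \<noteq> v \<Longrightarrow> u \<noteq> w \<Longrightarrow> ?D' u = ?D u"
    using deg_insert[OF s vV wV vw] by auto
  from P0 have dist: "x0 \<noteq> y0" "x0 \<noteq> z0" "x0 \<noteq> t0" "y0 \<noteq> z0" "y0 \<noteq> t0" "z0 \<noteq> t0"
    and e1: "adj ?E x0 y0" and e2: "adj ?E y0 z0" and e3: "adj ?E z0 t0" and inV: "x0 \<in> V" "y0 \<in> V" "z0 \<in> V" "t0 \<in> V"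
    by (auto simp: path4)
  have "is_path V E [x0,y0,z0,t0]" using e1 e2 e3 nv dist inV by (auto simp: path4 adj_insert)
  moreover have "deg_monotone V E [x0,y0,z0,t0]" using M0 Do[of x0] Do[of y0] Do[of z0] Do[of t0] nv by (auto simp: mono4)
  ultimately show False using no4 by blast
qed



lemma deg_three:
  assumes s: "simple_graph V E" and "deg V E v = 3"
  obtains a b c where "a \<in> V" "b \<in> V" "c \<in> V" "a \<noteq> b" "b \<noteq> c" "a \<noteq> c" "\<And>y. adj E v y \<longleftrightarrow> y = a \<or> y = b \<or> y = c"
proof -
  have "card {u\<in>V. adj E u v} = 3" using assms by (simp add: deg_def)
  then obtain a b c where q: "{u\<in>V. adj E u v} = {a,b,c}" "a \<noteq> b" "b \<noteq> c" "a \<noteq> c" by (meson card_3_iff)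
  then have abc: "a \<in> V" "b \<in> V" "c \<in> V" by auto
  have "adj E v y \<longleftrightarrow> y = a \<or> y = b \<or> y = c" for y
  proof
    assume "adj E v y" then have "y \<in> {u\<in>V. adj E u v}" using adj_V[OF s, of v y] adj_sym[of E v y] by simp
    thus "y = a \<or> y = b \<or> y = c" using q by blast
  next
    assume "y = a \<or> y = b \<or> y = c"
    then have "adj E y v" using q by blast
    thus "adj E v y" using adj_sym[of E v y] by simp
  qed
  with abc q show ?thesis using that by blast
qed

lemma safe3d:
  assumes s: "simple_graph V E"
    and V4: "V = {v,q,a,b}" and dist: "v \<noteq> q" "v \<noteq> a" "v \<noteq> b" "q \<noteq> a" "q \<noteq> b" "a \<noteq> b"
    and vq: "\<And>y. adj E v y \<longleftrightarrow> y = q"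
    and qn: "\<And>y. adj E q y \<longleftrightarrow> y = v \<or> y = a \<or> y = b"
    and an: "\<And>y. adj E a y \<longleftrightarrow> y = q \<or> y = b"
    and bn: "\<And>y. adj E b y \<longleftrightarrow> y = q \<or> y = a"
    and dv: "deg V E v = 1" and dq: "deg V E q = 3" and da: "deg V E a = 2" and db: "deg V E b = 2"
  shows "\<not> (\<exists>p. is_path V (insert {v,a} E) p \<and> deg_monotone V (insert {v,a} E) p \<and> length p = Suc 3)"
proof
  let ?E = "insert {v,a} E"
  let ?D = "deg V E" and ?D' = "deg V ?E"
  assume "\<exists>p. is_path V ?E p \<and> deg_monotone V ?E p \<and> length p = Suc 3"
  then obtain p where p: "is_path V ?E p" "deg_monotone V ?E p" "length p = 4" by auto
  then obtain x y z t where "p = [x,y,z,t]" using len4[of p] by auto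
  then have P: "is_path V ?E [x,y,z,t]" and M: "deg_monotone V ?E [x,y,z,t]" using p by auto
  have vV: "v \<in> V" and aV: "a \<in> V" using V4 by auto
  have ne: "{v,a} \<notin> E" using vq[of a] dist by (simp add: adj_def)
  have D': "\<And>w. ?D' w = ?D w + (if w = v \<or> w = a then 1 else 0)"
    using deg_insert[OF s vV aV dist(2) ne] by blast
  have Dv: "?D' v = 2" and Dq: "?D' q = 3" and Da: "?D' a = 3" and Db: "?D' b = 2"
    using D' dv dq da db dist by auto
  have nvb: "\<not> adj ?E v b" "\<not> adj ?E b v" using vq[of b] bn[of v] dist by (auto simp: adj_insert)
  from P have dd: "x \<noteq> y" "x \<noteq> z" "x \<noteq> t" "y \<noteq> z" "y \<noteq> t" "z \<noteq> t"
    and e1: "adj ?E x y" and e3: "adj ?E z t" and inV: "x \<in> V" "y \<in> V" "z \<in> V" "t \<in> V"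
    by (auto simp: path4)
  have Mo: "(?D' x \<le> ?D' y \<and> ?D' y \<le> ?D' z \<and> ?D' z \<le> ?D' t) \<or> (?D' x \<ge> ?D' y \<and> ?D' y \<ge> ?D' z \<and> ?D' z \<ge> ?D' t)"
    using M by (simp only: mono4)
  have vals: "\<And>u. u \<in> V \<Longrightarrow> (?D' u = 2 \<longleftrightarrow> u = v \<or> u = b) \<and> (?D' u = 3 \<longleftrightarrow> u = q \<or> u = a)"
    using V4 Dv Dq Da Db by auto
  have allin: "{x,y,z,t} = V"
  proof -
    have "{x,y,z,t} \<subseteq> V" using inV by auto
    moreover have "card {x,y,z,t} = 4" using dd by auto
    moreover have "card V \<le> 4" using V4 by (simp add: card_insert_if)
    moreover have "finite V" using V4 by simp
    ultimately show ?thesis by (metis card_seteq)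
  qed
  have "v \<in> {x,y,z,t}" "b \<in> {x,y,z,t}" using allin V4 by auto
  let ?f = "?D'"
  have fx: "(?f x = 2 \<longleftrightarrow> x = v \<or> x = b) \<and> (?f x = 3 \<longleftrightarrow> x = q \<or> x = a)" using vals inV by blast
  have fy: "(?f y = 2 \<longleftrightarrow> y = v \<or> y = b) \<and> (?f y = 3 \<longleftrightarrow> y = q \<or> y = a)" using vals inV by blast
  have fz: "(?f z = 2 \<longleftrightarrow> z = v \<or> z = b) \<and> (?f z = 3 \<longleftrightarrow> z = q \<or> z = a)" using vals inV by blast
  have ft: "(?f t = 2 \<longleftrightarrow> t = v \<or> t = b) \<and> (?f t = 3 \<longleftrightarrow> t = q \<or> t = a)" using vals inV by blast
  have in4: "x \<in> {v,q,a,b}" "y \<in> {v,q,a,b}" "z \<in> {v,q,a,b}" "t \<in> {v,q,a,b}" using inV V4 by auto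
  have r23: "?f x = 2 \<or> ?f x = 3" "?f y = 2 \<or> ?f y = 3" "?f z = 2 \<or> ?f z = 3" "?f t = 2 \<or> ?f t = 3"
    using in4 Dv Dq Da Db by auto
  have vb: "v \<in> {x,y,z,t}" "b \<in> {x,y,z,t}" by fact+
  from Mo show False
  proof
    assume inc: "?f x \<le> ?f y \<and> ?f y \<le> ?f z \<and> ?f z \<le> ?f t"
    have "?f y = 2"
    proof (rule ccontr)
      assume "?f y \<noteq> 2"
      then have "?f y = 3" "?f z = 3" "?f t = 3" using r23 inc by auto
      then have "y \<noteq> v" "y \<noteq> b" "z \<noteq> v" "z \<noteq> b" "t \<noteq> v" "t \<noteq> b" using fy fz ft dist by auto
      then have "v = x" "b = x" using vb by auto
      then show False using dist by simp
    qed
    then have "?f x = 2" using r23 inc by auto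
    then have "x = v \<or> x = b" "y = v \<or> y = b" using fx fy \<open>?f y = 2\<close> by auto
    then have "(x = v \<and> y = b) \<or> (x = b \<and> y = v)" using dd by auto
    then show False using e1 nvb by auto
  next
    assume dec: "?f x \<ge> ?f y \<and> ?f y \<ge> ?f z \<and> ?f z \<ge> ?f t"
    have "?f z = 2"
    proof (rule ccontr)
      assume "?f z \<noteq> 2"
      then have "?f z = 3" "?f y = 3" "?f x = 3" using r23 dec by auto
      then have "y \<noteq> v" "y \<noteq> b" "z \<noteq> v" "z \<noteq> b" "x \<noteq> v" "x \<noteq> b" using fy fz fx dist by auto
      then have "v = t" "b = t" using vb by auto
      then show False using dist by simp
    qed
    then have "?f t = 2" using r23 dec by auto
    then have "t = v \<or> t = b" "z = v \<or> z = b" using ft fz \<open>?f z = 2\<close> by auto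
    then have "(z = v \<and> t = b) \<or> (z = b \<and> t = v)" using dd by auto
    then show False using e3 nvb by auto
  qed
qed


lemma reg2_K3:
  assumes s: "simple_graph V E" and c: "connected V E" and k: "mp V E = 3"
    and all2: "\<forall>y\<in>V. deg V E y = 2" and ne: "V \<noteq> {}"
  shows "is_K3 V E"
proof -
  have no4: "\<And>a b c d. is_path V E [a,b,c,d] \<Longrightarrow> \<not> deg_monotone V E [a,b,c,d]" using no4[OF s k] by blast
  obtain a where aV: "a \<in> V" using ne by blast
  obtain b c where bc: "b \<in> V" "c \<in> V" "b \<noteq> c" and an: "\<And>y. adj E a y \<longleftrightarrow> y = b \<or> y = c"
    using deg_two[OF s] all2 aV by metis
  obtain r1 r2 where r: "r1 \<noteq> r2" and bn0: "\<And>y. adj E b y \<longleftrightarrow> y = r1 \<or> y = r2"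
    using deg_two[OF s] all2 bc by metis
  have aba: "adj E b a" using an[of b] adj_symD[of E a b] by simp
  then have "a = r1 \<or> a = r2" using bn0[of a] by simp
  then obtain b' where bn: "\<And>y. adj E b y \<longleftrightarrow> y = a \<or> y = b'" using bn0 r by metis
  have ab: "a \<noteq> b" using aba adj_irrefl[OF s] by auto
  have ac: "a \<noteq> c" using an[of a] adj_irrefl[OF s, of a] by auto
  have bb': "b' \<noteq> b" using bn[of b] adj_irrefl[OF s, of b] by auto
  have b'V: "b' \<in> V" using bn[of b'] adj_V[OF s, of b b'] by auto
  have ab': "b' \<noteq> a"
  proof
    assume "b' = a"
    then have "\<And>y. adj E b y \<longleftrightarrow> y = a" using bn by auto
    then have "deg V E b \<le> card {a}" using nbrs_card[OF s, of b "{a}"] by auto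
    then show False using all2 bc by auto
  qed
  show ?thesis
  proof (cases "b' = c")
    case True
    have aca: "adj E c a" using an[of c] adj_symD[of E a c] by simp
    have acb: "adj E c b" using bn[of c] True adj_symD[of E b c] by simp
    obtain s1 s2 where "s1 \<noteq> s2" and cn0: "\<And>y. adj E c y \<longleftrightarrow> y = s1 \<or> y = s2"
      using deg_two[OF s] all2 bc by metis
    have "a = s1 \<or> a = s2" "b = s1 \<or> b = s2" using cn0[of a] cn0[of b] aca acb by auto
    then have cn: "\<And>y. adj E c y \<longleftrightarrow> y = a \<or> y = b" using cn0 \<open>s1 \<noteq> s2\<close> ab by auto
    have "\<forall>x\<in>{a,b,c}. \<forall>y. adj E x y \<longrightarrow> y \<in> {a,b,c}" using an bn cn True by auto
    then have "V \<subseteq> {a,b,c}" using closure[OF c, of a "{a,b,c}"] aV by auto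
    then have V3: "V = {a,b,c}" using aV bc by auto
    have "card V = 3" using V3 ab ac bc by auto
    moreover have "E = {e. e \<subseteq> V \<and> card e = 2}"
    proof
      show "E \<subseteq> {e. e \<subseteq> V \<and> card e = 2}" using s by (auto simp: simple_graph_def)
      show "{e. e \<subseteq> V \<and> card e = 2} \<subseteq> E"
      proof
        fix e assume "e \<in> {e. e \<subseteq> V \<and> card e = 2}"
        then have eV: "e \<subseteq> V" and "card e = 2" by auto
        then obtain x y where xy: "e = {x,y}" "x \<noteq> y" by (meson card_2_iff)
        then have "x \<in> {a,b,c}" "y \<in> {a,b,c}" using eV V3 by auto
        then have "adj E x y" using xy an[of y] bn[of y] cn[of y] True by auto
        thus "e \<in> E" using xy by (simp add: adj_def)
      qed
    qed
    ultimately show ?thesis by (simp add: is_K3_def)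
  next
    case False
    have "is_path V E [c,a,b,b']" using bc aV b'V ab ac ab' bb' False an[of c] an[of b] bn[of b'] adj_symD[of E a c]
      by (auto simp: path4)
    moreover have "deg_monotone V E [c,a,b,b']" using all2 bc aV b'V by (simp add: mono4)
    ultimately show ?thesis using no4 by blast
  qed
qed



lemma card2le: "card {a,b} \<le> 2"
  by (cases "a = b") auto

lemma part2:
  assumes s: "simple_graph V E" and c: "connected V E" and sat: "saturated V E"
    and m: "card E \<le> card V" and k: "mp V E = 3"
  shows "is_K3 V E"
proof -
  let ?D = "deg V E"
  have fV: "finite V" using s by (simp add: simple_graph_def)
  have n3: "card V \<ge> 3" using mp_le_card[OF s] k by simp
  then have n2: "card V \<ge> 2" by simp
  have ne: "V \<noteq> {}" using n3 by auto
  have no4: "\<And>a b c d. is_path V E [a,b,c,d] \<Longrightarrow> \<not> deg_monotone V E [a,b,c,d]" using no4[OF s k] by blast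
  have nok: "\<not> (\<exists>p. is_path V (insert {u,x} E) p \<and> deg_monotone V (insert {u,x} E) p \<and> length p = Suc 3) \<Longrightarrow>
      u \<in> V \<Longrightarrow> x \<in> V \<Longrightarrow> u \<noteq> x \<Longrightarrow> \<not> adj E u x \<Longrightarrow> False" for u x
    using sat_contra[OF s sat k, of u x] by (simp add: adj_def)
  show ?thesis
  proof (cases "\<exists>v\<in>V. ?D v = 1")
    case False
    then have "\<forall>y\<in>V. ?D y = 2" using leaf_or_2reg[OF s c m n2] by blast
    thus ?thesis using reg2_K3[OF s c k _ ne] by blast
  next
    case True
    have nb3: "?D q \<ge> 3" if vV: "v \<in> V" and dv: "?D v = 1" and vq: "\<And>y. adj E v y \<longleftrightarrow> y = q" for v q
    proof -
      have avq: "adj E v q" using vq by simp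
      have aqv: "adj E q v" using adj_symD[OF avq] .
      have qV: "q \<in> V" using adj_V[OF s avq] by auto
      have vnq: "v \<noteq> q" using adj_irrefl[OF s] avq by auto
      have "?D q \<ge> 1" using nbrs_card2[OF s, of "{v}" q] aqv vV by auto
      moreover have "?D q \<noteq> 1"
      proof
        assume "?D q = 1"
        then obtain q' where qq: "\<And>y. adj E q y \<longleftrightarrow> y = q'" using deg_one[OF s] by metis
        have "q' = v" using qq[of v] aqv by simp
        have "\<forall>a\<in>{v,q}. \<forall>b. adj E a b \<longrightarrow> b \<in> {v,q}" using vq qq \<open>q' = v\<close> by auto
        then have "V \<subseteq> {v,q}" using closure[OF c, of v "{v,q}"] vV by auto
        then have "card V \<le> card {v,q}" by (intro card_mono) auto
        then show False using n3 card2le[of v q] by simp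
      qed
      moreover have "?D q \<noteq> 2"
      proof
        assume "?D q = 2"
        then obtain r1 r2 where r: "r1 \<noteq> r2" "\<And>y. adj E q y \<longleftrightarrow> y = r1 \<or> y = r2"
          using deg_two[OF s] by metis
        have "v = r1 \<or> v = r2" using r(2)[of v] aqv by simp
        then obtain r where qn: "\<And>y. adj E q y \<longleftrightarrow> y = v \<or> y = r" and rv: "r \<noteq> v" using r by metis
        have aqr: "adj E q r" using qn[of r] by simp
        have rV: "r \<in> V" using adj_V[OF s aqr] by blast
        have rq: "r \<noteq> q" using adj_irrefl[OF s] aqr by auto
        have "\<not> adj E v r" using vq[of r] rq by simp
        then show False using nok[OF safe3a[OF s no4 vV qV rV vq qn rv dv \<open>?D q = 2\<close>] vV rV rv[symmetric]] by blast
      qed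
      ultimately show ?thesis by simp
    qed
    define \<Delta> where "\<Delta> = Max (?D ` V)"
    have Dle: "\<And>y. y \<in> V \<Longrightarrow> ?D y \<le> \<Delta>" unfolding \<Delta>_def using fV by simp
    have "\<Delta> \<in> ?D ` V" unfolding \<Delta>_def using fV ne by (intro Max_in) auto
    then obtain x0 where x0V: "x0 \<in> V" and dx0: "?D x0 = \<Delta>" by auto
    show ?thesis
    proof (cases "\<exists>v\<in>V. \<exists>x\<in>V. ?D v = 1 \<and> ?D x = \<Delta> \<and> x \<noteq> v \<and> \<not> adj E v x")
      case True
      then obtain v x where vV: "v \<in> V" and xV: "x \<in> V" and dv: "?D v = 1" and dx: "?D x = \<Delta>"
        and xv: "x \<noteq> v" and nvx: "\<not> adj E v x" by blast
      obtain q where qV: "q \<in> V" and vq: "\<And>y. adj E v y \<longleftrightarrow> y = q" using deg_one[OF s dv] by blast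
      have xq: "x \<noteq> q" using nvx vq by auto
      have q3: "?D q \<ge> 3" using nb3[OF vV dv vq] .
      have xmax: "\<And>y. y \<in> V \<Longrightarrow> ?D y \<le> ?D x" using Dle dx by simp
      show ?thesis using nok[OF safe3b[OF s no4 vV xV qV vq xv xq dv q3 xmax] vV xV xv[symmetric] nvx] by blast
    next
      case H: False
      obtain v0 where v0V: "v0 \<in> V" and dv0: "?D v0 = 1" using True by blast
      obtain q0 where q0V: "q0 \<in> V" and v0q: "\<And>y. adj E v0 y \<longleftrightarrow> y = q0" using deg_one[OF s dv0] by blast
      have q03: "?D q0 \<ge> 3" using nb3[OF v0V dv0 v0q] .
      have D3: "\<Delta> \<ge> 3" using Dle[OF q0V] q03 by simp
      have maxq: "\<And>y. y \<in> V \<Longrightarrow> ?D y = \<Delta> \<Longrightarrow> y = q0"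
      proof -
        fix y assume "y \<in> V" "?D y = \<Delta>"
        moreover have "y \<noteq> v0" using calculation dv0 D3 by auto
        ultimately have "adj E v0 y" using H v0V dv0 by blast
        thus "y = q0" using v0q by simp
      qed
      have dq0: "?D q0 = \<Delta>" using maxq[OF x0V dx0] dx0 by simp
      have qmax: "?D y < ?D q0" if "y \<in> V" "y \<noteq> q0" for y
      proof -
        have "?D y \<le> \<Delta>" using Dle that by simp
        moreover have "?D y \<noteq> \<Delta>" using maxq that by blast
        ultimately show ?thesis using dq0 by simp
      qed
      have leafq: "\<And>y. adj E w y \<longleftrightarrow> y = q0" if wV: "w \<in> V" and dw: "?D w = 1" for w
      proof -
        have "q0 \<noteq> w" using dw q03 by auto
        then have "adj E w q0" using H wV dw q0V dq0 by blast
        moreover obtain q' where q': "\<And>y. adj E w y \<longleftrightarrow> y = q'" using deg_one[OF s dw] by blast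
        ultimately have "q' = q0" by simp
        then show "\<And>y. adj E w y \<longleftrightarrow> y = q0" using q' by simp
      qed
      show ?thesis
      proof (cases "\<exists>w\<in>V. ?D w = 1 \<and> w \<noteq> v0")
        case True
        then obtain w where wV: "w \<in> V" and dw: "?D w = 1" and wv: "w \<noteq> v0" by blast
        have wq: "\<And>y. adj E w y \<longleftrightarrow> y = q0" using leafq[OF wV dw] .
        have "\<not> adj E v0 w" using v0q[of w] dw q03 by auto
        then show ?thesis
          using nok[OF safe3c[OF s no4 v0V wV q0V wv[symmetric] v0q wq dv0 dw q03 qmax] v0V wV wv[symmetric]] by blast
      next
        case uniq: False
        have vq0: "v0 \<noteq> q0" using dv0 q03 by auto
        define f where "f y = (if y = v0 then 1 else if y = q0 then 3 else (2::nat))" for y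
        have fle: "\<forall>y\<in>V. f y \<le> ?D y"
        proof
          fix y assume yV: "y \<in> V"
          show "f y \<le> ?D y"
          proof (cases "y = v0 \<or> y = q0")
            case True thus ?thesis using dv0 q03 f_def by auto
          next
            case False
            obtain w where "w \<in> V" "w \<noteq> y" using v0V False by blast
            then have "?D y \<ge> 1" using deg_pos[OF s c yV] by blast
            moreover have "?D y \<noteq> 1" using uniq yV False by blast
            ultimately show ?thesis using False f_def by auto
          qed
        qed
        have "sum f V = f v0 + f q0 + sum f (V - {v0} - {q0})"
          using fV v0V q0V vq0 by (simp add: sum.remove[of V v0] sum.remove[of "V - {v0}" q0])
        also have "\<dots> = 4 + 2 * card (V - {v0} - {q0})" using f_def vq0 by simp
        also have "card (V - {v0} - {q0}) = card V - 2" using fV v0V q0V vq0 by (simp add: card_Diff_singleton_if)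
        finally have "sum f V = 2 * card V" using n3 by simp
        then have "sum (deg V E) V \<le> sum f V" using handshake[OF s] m by simp
        then have feq: "\<forall>y\<in>V. f y = ?D y" using sum_eq_pointwise[OF fV fle] by blast
        have dq: "?D q0 = 3" using feq q0V vq0 f_def by auto
        have d2: "\<And>y. y \<in> V \<Longrightarrow> y \<noteq> v0 \<Longrightarrow> y \<noteq> q0 \<Longrightarrow> ?D y = 2" using feq f_def by auto
        obtain n1 n2 n3' where nV: "n1 \<in> V" "n2 \<in> V" "n3' \<in> V" and nd: "n1 \<noteq> n2" "n2 \<noteq> n3'" "n1 \<noteq> n3'"
          and qn0: "\<And>y. adj E q0 y \<longleftrightarrow> y = n1 \<or> y = n2 \<or> y = n3'" by (rule deg_three[OF s dq]) blast
        have "adj E q0 v0" using v0q[of q0] adj_symD[of E v0 q0] by simp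
        then have "v0 = n1 \<or> v0 = n2 \<or> v0 = n3'" using qn0 by simp
        then have "\<exists>a b. a \<in> V \<and> b \<in> V \<and> a \<noteq> b \<and> a \<noteq> v0 \<and> b \<noteq> v0 \<and> (\<forall>y. adj E q0 y \<longleftrightarrow> y = v0 \<or> y = a \<or> y = b)"
        proof (elim disjE)
          assume "v0 = n1" thus ?thesis using nV nd qn0 by (intro exI[of _ n2] exI[of _ n3']) auto
        next
          assume "v0 = n2" thus ?thesis using nV nd qn0 by (intro exI[of _ n1] exI[of _ n3']) auto
        next
          assume "v0 = n3'" thus ?thesis using nV nd qn0 by (intro exI[of _ n1] exI[of _ n2]) auto
        qed
        then obtain a b where aV: "a \<in> V" and bV: "b \<in> V" and abd: "a \<noteq> b" "a \<noteq> v0" "b \<noteq> v0"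
          and qn: "\<And>y. adj E q0 y \<longleftrightarrow> y = v0 \<or> y = a \<or> y = b" by blast
        have aq: "a \<noteq> q0" and bq: "b \<noteq> q0" using qn[of q0] adj_irrefl[OF s, of q0] by auto
        have da: "?D a = 2" and db: "?D b = 2" using d2 aV bV abd aq bq by auto
        have aqa: "adj E a q0" using qn[of a] adj_symD[of E q0 a] by simp
        have bqb: "adj E b q0" using qn[of b] adj_symD[of E q0 b] by simp
        have nbr: "\<And>y. adj E u y \<longleftrightarrow> y = q0 \<or> y = u'" if uab: "(u = a \<and> u' = b) \<or> (u = b \<and> u' = a)" for u u'
        proof -
          have uV: "u \<in> V" and du: "?D u = 2" and uq: "adj E u q0" and uv: "u \<noteq> v0" and uq0: "u \<noteq> q0"
            using uab aV bV da db aqa bqb abd aq bq by auto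
          have u'q: "adj E q0 u'" using uab qn by auto
          obtain s1 s2 where ss: "s1 \<noteq> s2" "\<And>y. adj E u y \<longleftrightarrow> y = s1 \<or> y = s2" using deg_two[OF s du] by metis
          have "q0 = s1 \<or> q0 = s2" using ss(2)[of q0] uq by simp
          then obtain u2 where u2: "\<And>y. adj E u y \<longleftrightarrow> y = q0 \<or> y = u2" and u2q: "u2 \<noteq> q0" using ss by metis
          have "u2 = u'"
          proof (rule ccontr)
            assume ne2: "u2 \<noteq> u'"
            have au2: "adj E u u2" using u2[of u2] by simp
            have u2V: "u2 \<in> V" using adj_V[OF s au2] by blast
            have u2u: "u2 \<noteq> u" using adj_irrefl[OF s] au2 by auto
            have u2v: "u2 \<noteq> v0" using v0q[of u] au2 adj_symD[of E u u2] uq0 by auto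
            have du2: "?D u2 = 2" using d2 u2V u2v u2q by blast
            have au2u: "adj E u2 u" using adj_symD[OF au2] .
            obtain t1 t2 where tt: "t1 \<noteq> t2" "\<And>y. adj E u2 y \<longleftrightarrow> y = t1 \<or> y = t2" using deg_two[OF s du2] by metis
            have "u = t1 \<or> u = t2" using tt(2)[of u] au2u by simp
            then obtain u3 where u3: "\<And>y. adj E u2 y \<longleftrightarrow> y = u \<or> y = u3" and u3u: "u3 \<noteq> u" using tt by metis
            have au3: "adj E u2 u3" using u3[of u3] by simp
            have u3V: "u3 \<in> V" using adj_V[OF s au3] by blast
            have u3u2: "u3 \<noteq> u2" using adj_irrefl[OF s] au3 by auto
            have u2notq: "\<not> adj E q0 u2" using qn[of u2] u2v u2u ne2 uab by auto
            have u3q: "u3 \<noteq> q0" using au3 u2notq adj_symD[of E u2 u3] by auto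
            have u3v: "u3 \<noteq> v0" using v0q[of u2] au3 adj_symD[of E u2 u3] u2q by auto
            have du3: "?D u3 = 2" using d2 u3V u3v u3q by blast
            have "is_path V E [q0,u,u2,u3]"
              using q0V uV u2V u3V uq0 u2q u3q u2u u3u u3u2 adj_symD[OF uq] au2 au3 by (auto simp: path4)
            moreover have "deg_monotone V E [q0,u,u2,u3]" using dq du du2 du3 by (simp add: mono4)
            ultimately show False using no4 by blast
          qed
          then show "\<And>y. adj E u y \<longleftrightarrow> y = q0 \<or> y = u'" using u2 by simp
        qed
        have an: "\<And>y. adj E a y \<longleftrightarrow> y = q0 \<or> y = b" using nbr by blast
        have bn: "\<And>y. adj E b y \<longleftrightarrow> y = q0 \<or> y = a" using nbr by blast
        have "\<forall>x\<in>{v0,q0,a,b}. \<forall>y. adj E x y \<longrightarrow> y \<in> {v0,q0,a,b}" using v0q qn an bn by auto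
        then have "V \<subseteq> {v0,q0,a,b}" using closure[OF c, of v0 "{v0,q0,a,b}"] v0V by auto
        then have V4: "V = {v0,q0,a,b}" using v0V q0V aV bV by auto
        have "\<not> adj E v0 a" using v0q[of a] aq by simp
        then show ?thesis
          using nok[OF safe3d[OF s V4 vq0 abd(2)[symmetric] abd(3)[symmetric] aq[symmetric] bq[symmetric] abd(1) v0q qn an bn dv0 dq da db]
                v0V aV abd(2)[symmetric]] by blast
      qed
    qed
  qed
qed



theorem lemma3p2:
  fixes V :: "'a set" and E :: "'a set set"
  assumes "simple_graph V E" and "connected V E" and "saturated V E"
    and "card E \<le> card V" and "2 \<le> mp V E" and "mp V E \<le> 3"
  shows "(mp V E = 2 \<longrightarrow>
            (\<exists>d\<ge>1. is_star V E d \<and>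
               (d \<ge> 2 \<longrightarrow> (\<forall>u\<in>V. \<forall>v\<in>V. u \<noteq> v \<and> {u, v} \<notin> E \<longrightarrow>
                                mp V (insert {u, v} E) = 3))))
       \<and> (mp V E = 3 \<longrightarrow> is_K3 V E)"
  using part1[OF assms(1-4)] part2[OF assms(1-4)] by blast

end
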